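(* Let $1\le i\le r$, $(\ell^+,\mathbf s^+)\in\mathbf F_+$ and $(\ell,\mathbf s)\in\mathbf F$. Then $\mathrm{pr}\big(\mathbf x^+_{i,r}(\ell^+,\mathbf s^+)\,\mathbf x^-_{i,r}(\ell,\mathbf s)\big)$ is a linear combination of elements $\mathbf x^-_{i,r}(\ell-\ell^+,\mathbf s')$ with $(\ell-\ell^+,\mathbf s')\in\mathbf F$ and $|\mathbf s'|=|\mathbf s|+|\mathbf s^+|$ (in particular it is $0$ if $\ell^+>\ell$).
   Context: $\mathfrak g=\mathfrak{sl}_{r+1}(\mathbb C)$, $\mathfrak h$ diagonal, $x^+_{i,j}=E_{i,j+1}$, $x^-_{i,j}=E_{j+1,i}$, $\mathfrak n^\pm=\bigoplus\mathbb Cx^\pm_{i,j}$, $\mathfrak b^+=\mathfrak h\oplus\mathfrak n^+$, $\mathfrak a[t]=\mathfrak a\otimes\mathbb C[t]$. $\mathrm{pr}:U(\mathfrak g[t])\to U(\mathfrak n^-[t])$ is the projection along $U(\mathfrak g[t])\mathfrak b^+[t]$ in $U(\mathfrak g[t])=U(\mathfrak n^-[t])\oplus U(\mathfrak g[t])\mathfrak b^+[t]$. $\mathbf F$: pairs $(\ell,\mathbf s)$, $\ell\in\mathbb N$, $\mathbf s=(\mathbf s(1)\le\dots\le\mathbf s(\ell))\in\mathbb N^\ell$, $|\mathbf s|=\sum_p\mathbf s(p)$; $\mathbf F_+\subset\mathbf F$: $(0,\emptyset)$ and pairs with all $\mathbf s(p)>0$. $\mathbf x^\pm_{i,j}(\ell,\mathbf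 s)=\prod_{p=1}^\ell(x^\pm_{i,j}\otimes t^{\mathbf s(p)})$ (equal to $1$ if $\ell=0$). *)

theory Defs
  imports Complex_Main
begin

text \<open>Elements of sl_n[t] (n = r+1) are represented as functions
  x k a b = coefficient of E_{a,b} tensor t^k, indices a,b in {1..n}.\<close>
type_synonym cur = "nat \<Rightarrow> nat \<Rightarrow> nat \<Rightarrow> complex"

definition valid :: "nat \<Rightarrow> cur \<Rightarrow> bool" where
  "valid n x \<longleftrightarrow> finite {k. x k \<noteq> (\<lambda>a b. 0)}
     \<and> (\<forall>k a b. (a \<notin> {1..n} \<or> b \<notin> {1..n}) \<longrightarrow> x k a b = 0)
     \<and> (\<forall>k. (\<Sum>a\<in>{1..n}. x k a a) = 0)"

text \<open>Lie bracket of g[t]: [X t^p, Y t^q] = [X,Y] t^(p+q).\<close>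
definition bracket :: "nat \<Rightarrow> cur \<Rightarrow> cur \<Rightarrow> cur" where
  "bracket n x y = (\<lambda>k a b. \<Sum>p\<in>{..k}. \<Sum>c\<in>{1..n}.
      x p a c * y (k - p) c b - y (k - p) a c * x p c b)"

text \<open>Free associative algebra on the set cur: noncommutative polynomials
  as coefficient functions on words.\<close>
type_synonym fa = "cur list \<Rightarrow> complex"

definition fin_supp :: "fa \<Rightarrow> bool" where
  "fin_supp f \<longleftrightarrow> finite {w. f w \<noteq> 0}"

definition fa_word :: "cur list \<Rightarrow> fa" where
  "fa_word w = (\<lambda>u. if u = w then 1 else 0)"

definition fa_gen :: "cur \<Rightarrow> fa" where
  "fa_gen x = fa_word [x]"

definition fa_mul :: "fa \<Rightarrow> fa \<Rightarrow> fa" where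
  "fa_mul f g = (\<lambda>w. \<Sum>p\<in>{..length w}. f (take p w) * g (drop p w))"

definition fa_add :: "fa \<Rightarrow> fa \<Rightarrow> fa" where
  "fa_add f g = (\<lambda>w. f w + g w)"

definition fa_diff :: "fa \<Rightarrow> fa \<Rightarrow> fa" where
  "fa_diff f g = (\<lambda>w. f w - g w)"

definition fa_smult :: "complex \<Rightarrow> fa \<Rightarrow> fa" where
  "fa_smult c f = (\<lambda>w. c * f w)"

definition cspan :: "fa set \<Rightarrow> fa set" where
  "cspan S = {f. \<exists>F c. finite F \<and> F \<subseteq> S \<and> f = (\<lambda>w. \<Sum>g\<in>F. c g * g w)}"

text \<open>Defining relations of U(sl_n[t]) as a quotient of the free algebra:
  non-elements of g[t] are killed, iota is linear, and iota x iota y - iota y iota x = iota [x,y].\<close>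
definition rels :: "nat \<Rightarrow> fa set" where
  "rels n =
     {fa_gen x | x. \<not> valid n x}
   \<union> {fa_diff (fa_gen (\<lambda>k a b. x k a b + y k a b)) (fa_add (fa_gen x) (fa_gen y)) | x y.
        valid n x \<and> valid n y}
   \<union> {fa_diff (fa_gen (\<lambda>k a b. c * x k a b)) (fa_smult c (fa_gen x)) | c x. valid n x}
   \<union> {fa_diff (fa_diff (fa_mul (fa_gen x) (fa_gen y)) (fa_mul (fa_gen y) (fa_gen x)))
          (fa_gen (bracket n x y)) | x y. valid n x \<and> valid n y}"

text \<open>Two-sided ideal generated by the relations; U(g[t]) = free algebra / ideal n.\<close>
definition ideal :: "nat \<Rightarrow> fa set" where
  "ideal n = cspan {fa_mul (fa_mul a \<rho>) b | a \<rho> b. fin_supp a \<and> fin_supp b \<and> \<rho> \<in> rels n}"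

definition in_nminus :: "cur \<Rightarrow> bool" where
  "in_nminus x \<longleftrightarrow> (\<forall>k a b. x k a b \<noteq> 0 \<longrightarrow> b < a)"

definition in_bplus :: "cur \<Rightarrow> bool" where
  "in_bplus x \<longleftrightarrow> (\<forall>k a b. x k a b \<noteq> 0 \<longrightarrow> a \<le> b)"

text \<open>Representatives of U(n^-[t]): span of words in elements of n^-[t].\<close>
definition Nminus :: "nat \<Rightarrow> fa set" where
  "Nminus n = cspan {fa_word w | w. \<forall>x\<in>set w. valid n x \<and> in_nminus x}"

text \<open>Representatives of the left ideal U(g[t]) b^+[t] (plus the defining ideal).\<close>
definition Jleft :: "nat \<Rightarrow> fa set" where
  "Jleft n = {fa_add f g | f g.
      f \<in> cspan {fa_mul a (fa_gen y) | a y. fin_supp a \<and> valid n y \<and> in_bplus y}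
      \<and> g \<in> ideal n}"

text \<open>v represents pr(u): v lies in U(n^-[t]) and u - v lies in U(g[t]) b^+[t].\<close>
definition pr_rel :: "nat \<Rightarrow> fa \<Rightarrow> fa \<Rightarrow> bool" where
  "pr_rel n u v \<longleftrightarrow> v \<in> Nminus n \<and> fa_diff u v \<in> Jleft n"

text \<open>x^+_{i,j} tensor t^k = E_{i,j+1} t^k and x^-_{i,j} tensor t^k = E_{j+1,i} t^k.\<close>
definition xplus :: "nat \<Rightarrow> nat \<Rightarrow> nat \<Rightarrow> cur" where
  "xplus i j k = (\<lambda>k' a b. if k' = k \<and> a = i \<and> b = Suc j then 1 else 0)"

definition xminus :: "nat \<Rightarrow> nat \<Rightarrow> nat \<Rightarrow> cur" where
  "xminus i j k = (\<lambda>k' a b. if k' = k \<and> a = Suc j \<and> b = i then 1 else 0)"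

text \<open>bold x^{+-}_{i,j}(l, s) for s given as a sorted list of length l.\<close>
definition xvec_plus :: "nat \<Rightarrow> nat \<Rightarrow> nat list \<Rightarrow> fa" where
  "xvec_plus i j s = fa_word (map (xplus i j) s)"

definition xvec_minus :: "nat \<Rightarrow> nat \<Rightarrow> nat list \<Rightarrow> fa" where
  "xvec_minus i j s = fa_word (map (xminus i j) s)"

end

theory Submission
  imports Defs "HOL-Library.Function_Algebras" "HOL-Computational_Algebra.Formal_Power_Series"
begin

definition sm :: "complex \<Rightarrow> fa \<Rightarrow> fa" where "sm c f = (\<lambda>w. c * f w)"

definition subsp :: "fa set \<Rightarrow> bool" where
  "subsp T \<longleftrightarrow> (0::fa) \<in> T \<and> (\<forall>f\<in>T. \<forall>g\<in>T. f + g \<in> T) \<and> (\<forall>c. \<forall>f\<in>T. sm c f \<in> T)"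

lemma sm_apply[simp]: "sm c f w = c * f w" by (simp add: sm_def)

lemma fa_add_eq: "fa_add f g = f + g" by (simp add: fa_add_def plus_fun_def)
lemma fa_diff_eq: "fa_diff f g = f - g" by (simp add: fa_diff_def fun_diff_def)
lemma fa_smult_eq: "fa_smult c f = sm c f" by (simp add: fa_smult_def sm_def)

lemma subspD:
  assumes "subsp T"
  shows "0 \<in> T" "f \<in> T \<Longrightarrow> g \<in> T \<Longrightarrow> f + g \<in> T" "f \<in> T \<Longrightarrow> sm c f \<in> T"
  using assms by (auto simp: subsp_def)

lemma subsp_uminus: "subsp T \<Longrightarrow> f \<in> T \<Longrightarrow> - f \<in> T"
proof -
  assume "subsp T" "f \<in> T"
  then have "sm (-1) f \<in> T" by (rule subspD)
  moreover have "sm (-1) f = - f" by (rule ext) simp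
  ultimately show ?thesis by simp
qed

lemma subsp_diff: "subsp T \<Longrightarrow> f \<in> T \<Longrightarrow> g \<in> T \<Longrightarrow> f - g \<in> T"
  using subspD(2)[of T f "- g"] subsp_uminus[of T g] by simp

lemma subsp_sum:
  assumes "subsp T" "finite F" "\<And>g. g \<in> F \<Longrightarrow> h g \<in> T"
  shows "(\<lambda>w. \<Sum>g\<in>F. c g * h g w) \<in> T"
  using assms(2,3)
proof (induction F rule: finite_induct)
  case empty
  then show ?case using subspD(1)[OF assms(1)] by (simp add: zero_fun_def)
next
  case (insert x F)
  have "(\<lambda>w. \<Sum>g\<in>insert x F. c g * h g w) = sm (c x) (h x) + (\<lambda>w. \<Sum>g\<in>F. c g * h g w)"
    using insert by (auto simp: plus_fun_def)
  then show ?case using insert subspD[OF assms(1)] by simp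
qed

lemma subsp_sum':
  assumes "subsp T" "finite F" "\<And>g. g \<in> F \<Longrightarrow> h g \<in> T"
  shows "(\<lambda>w. \<Sum>g\<in>F. h g w) \<in> T"
  using subsp_sum[OF assms, where c="\<lambda>_. 1"] by simp

lemma cspan_I: "finite F \<Longrightarrow> F \<subseteq> S \<Longrightarrow> f = (\<lambda>w. \<Sum>g\<in>F. c g * g w) \<Longrightarrow> f \<in> cspan S"
  unfolding cspan_def by blast

lemma cspan_E: "f \<in> cspan S \<Longrightarrow> (\<And>F c. finite F \<Longrightarrow> F \<subseteq> S \<Longrightarrow> f = (\<lambda>w. \<Sum>g\<in>F. c g * g w) \<Longrightarrow> P) \<Longrightarrow> P"
  unfolding cspan_def by blast

lemma cspan_zero0: "(0::fa) \<in> cspan S"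
  by (rule cspan_I[of "{}"]) (auto simp: zero_fun_def)

lemma cspan_add0: 
  assumes "f \<in> cspan S" "g \<in> cspan S" shows "f + g \<in> cspan S"
proof -
  obtain F c where F: "finite F" "F \<subseteq> S" "f = (\<lambda>w. \<Sum>g\<in>F. c g * g w)"
    using assms(1) by (rule cspan_E)
  obtain G d where G: "finite G" "G \<subseteq> S" "g = (\<lambda>w. \<Sum>g\<in>G. d g * g w)"
    using assms(2) by (rule cspan_E)
  define e where "e x = (if x \<in> F then c x else 0) + (if x \<in> G then d x else 0)" for x
  have "f + g = (\<lambda>w. \<Sum>x\<in>F \<union> G. e x * x w)"
  proof
    fix w
    have "(\<Sum>x\<in>F \<union> G. e x * x w) = (\<Sum>x\<in>F \<union> G. (if x \<in> F then c x * x w else 0)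
           + (if x \<in> G then d x * x w else 0))"
      unfolding e_def by (rule sum.cong) (auto simp: distrib_right)
    also have "\<dots> = (\<Sum>x\<in>F \<union> G. (if x \<in> F then c x * x w else 0))
           + (\<Sum>x\<in>F \<union> G. (if x \<in> G then d x * x w else 0))"
      by (rule sum.distrib)
    also have "(\<Sum>x\<in>F \<union> G. (if x \<in> F then c x * x w else 0)) = (\<Sum>x\<in>F. c x * x w)"
      using F(1) G(1) by (subst sum.inter_filter[symmetric]) (auto intro: sum.cong)
    also have "(\<Sum>x\<in>F \<union> G. (if x \<in> G then d x * x w else 0)) = (\<Sum>x\<in>G. d x * x w)"
      using F(1) G(1) by (subst sum.inter_filter[symmetric]) (auto intro: sum.cong)
    finally show "(f + g) w = (\<Sum>x\<in>F \<union> G. e x * x w)" using F(3) G(3) by simp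
  qed
  then show ?thesis using F(1,2) G(1,2) by (intro cspan_I[of "F \<union> G" S _ e]) auto
qed

lemma cspan_sm0:
  assumes "f \<in> cspan S" shows "sm c f \<in> cspan S"
proof -
  obtain F d where F: "finite F" "F \<subseteq> S" "f = (\<lambda>w. \<Sum>g\<in>F. d g * g w)"
    using assms(1) by (rule cspan_E)
  have "sm c f = (\<lambda>w. \<Sum>g\<in>F. (c * d g) * g w)"
    using F(3) by (simp add: sum_distrib_left mult.assoc sm_def)
  then show ?thesis using F(1,2) by (intro cspan_I[of F S _ "\<lambda>g. c * d g"]) auto
qed

lemma subsp_cspan: "subsp (cspan S)"
  unfolding subsp_def using cspan_zero0 cspan_add0 cspan_sm0 by blast

lemma cspan_base: "g \<in> S \<Longrightarrow> g \<in> cspan S"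
  by (rule cspan_I[of "{g}" S g "\<lambda>_. 1"]) auto

lemma cspan_least: "subsp T \<Longrightarrow> S \<subseteq> T \<Longrightarrow> cspan S \<subseteq> T"
proof
  fix f assume a: "subsp T" "S \<subseteq> T" "f \<in> cspan S"
  obtain F c where F: "finite F" "F \<subseteq> S" "f = (\<lambda>w. \<Sum>g\<in>F. c g * g w)"
    using a(3) by (rule cspan_E)
  show "f \<in> T" unfolding F(3) by (rule subsp_sum[OF a(1) F(1)]) (use F(2) a(2) in auto)
qed

lemma cspan_mono: "S \<subseteq> T \<Longrightarrow> cspan S \<subseteq> cspan T"
  by (rule cspan_least[OF subsp_cspan]) (auto intro: cspan_base)

lemmas cspan_zero = subspD(1)[OF subsp_cspan]
lemmas cspan_add = subspD(2)[OF subsp_cspan]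
lemmas cspan_sm = subspD(3)[OF subsp_cspan]
lemmas cspan_diff = subsp_diff[OF subsp_cspan]
lemmas cspan_uminus = subsp_uminus[OF subsp_cspan]

lemma subsp_Int: "subsp A \<Longrightarrow> subsp B \<Longrightarrow> subsp (A \<inter> B)"
  by (auto simp: subsp_def)

lemma cspan_transfer:
  assumes "subsp K" "\<And>g. g \<in> X \<Longrightarrow> \<exists>g'\<in>Y. g - g' \<in> K" "f \<in> cspan X"
  shows "\<exists>f'\<in>cspan Y. f - f' \<in> K"
proof -
  let ?T = "{f. \<exists>f'\<in>cspan Y. f - f' \<in> K}"
  have "subsp ?T" unfolding subsp_def
  proof (intro conjI ballI allI)
    show "(0::fa) \<in> ?T" using cspan_zero subspD(1)[OF assms(1)] by force
  next
    fix f g assume "f \<in> ?T" "g \<in> ?T"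
    then obtain f' g' where "f' \<in> cspan Y" "f - f' \<in> K" "g' \<in> cspan Y" "g - g' \<in> K" by blast
    moreover have "(f + g) - (f' + g') = (f - f') + (g - g')" by simp
    have e: "(f + g) - (f' + g') = (f - f') + (g - g')" by simp
    have "(f - f') + (g - g') \<in> K" using subspD(2)[OF assms(1)] \<open>f - f' \<in> K\<close> \<open>g - g' \<in> K\<close> by blast
    then have "(f + g) - (f' + g') \<in> K" by (subst e)
    moreover have "f' + g' \<in> cspan Y" using cspan_add \<open>f' \<in> cspan Y\<close> \<open>g' \<in> cspan Y\<close> by blast
    ultimately show "f + g \<in> ?T" by blast
  next
    fix c f assume "f \<in> ?T"
    then obtain f' where "f' \<in> cspan Y" "f - f' \<in> K" by blast
    moreover have "sm c f - sm c f' = sm c (f - f')" by (rule ext) (simp add: algebra_simps)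
    ultimately have "sm c f' \<in> cspan Y" "sm c f - sm c f' \<in> K"
      using cspan_sm subspD(3)[OF assms(1)] by auto
    then show "sm c f \<in> ?T" by blast
  qed
  moreover have "X \<subseteq> ?T" using assms(2) cspan_base by blast
  ultimately have "cspan X \<subseteq> ?T" by (rule cspan_least)
  then show ?thesis using assms(3) by blast
qed

definition fsupp :: "fa \<Rightarrow> cur list set" where "fsupp f = {w. f w \<noteq> 0}"

lemma fin_supp_fsupp: "fin_supp f \<longleftrightarrow> finite (fsupp f)" by (simp add: fin_supp_def fsupp_def)
lemma finite_fsupp: "fin_supp f \<Longrightarrow> finite (fsupp f)" by (simp add: fin_supp_def fsupp_def)

lemma subsp_fin_supp: "subsp {f. fin_supp f}"
  unfolding subsp_def fin_supp_def
proof (intro conjI ballI allI)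
  show "(0::fa) \<in> {f. finite {w. f w \<noteq> 0}}" by simp
next
  fix f g :: fa assume "f \<in> {f. finite {w. f w \<noteq> 0}}" "g \<in> {f. finite {w. f w \<noteq> 0}}"
  then show "f + g \<in> {f. finite {w. f w \<noteq> 0}}"
    by (auto intro: finite_subset[of _ "{w. f w \<noteq> 0} \<union> {w. g w \<noteq> 0}"])
next
  fix c f assume "f \<in> {f::fa. finite {w. f w \<noteq> 0}}"
  then show "sm c f \<in> {f. finite {w. f w \<noteq> 0}}"
    by (auto intro: finite_subset[of _ "{w. f w \<noteq> 0}"])
qed

lemma fin_supp_word[simp]: "fin_supp (fa_word w)"
  unfolding fin_supp_def fa_word_def by simp

lemma fin_supp_cspan: "(\<And>g. g \<in> S \<Longrightarrow> fin_supp g) \<Longrightarrow> f \<in> cspan S \<Longrightarrow> fin_supp f"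
  using cspan_least[OF subsp_fin_supp, of S] by auto

lemma fin_supp_zero[simp]: "fin_supp 0" using subspD(1)[OF subsp_fin_supp] by simp
lemma fin_supp_add[simp]: "fin_supp f \<Longrightarrow> fin_supp g \<Longrightarrow> fin_supp (f + g)"
  using subspD(2)[OF subsp_fin_supp] by simp
lemma fin_supp_sm[simp]: "fin_supp f \<Longrightarrow> fin_supp (sm c f)"
  using subspD(3)[OF subsp_fin_supp] by simp
lemma fin_supp_diff[simp]: "fin_supp f \<Longrightarrow> fin_supp g \<Longrightarrow> fin_supp (f - g)"
  using subsp_diff[OF subsp_fin_supp] by simp
lemma fin_supp_uminus[simp]: "fin_supp f \<Longrightarrow> fin_supp (- f)"
  using subsp_uminus[OF subsp_fin_supp] by simp
lemma fin_supp_sum: "finite F \<Longrightarrow> (\<And>g. g \<in> F \<Longrightarrow> fin_supp (h g)) \<Longrightarrow> fin_supp (\<lambda>w. \<Sum>g\<in>F. c g * h g w)"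
  using subsp_sum[OF subsp_fin_supp, where F=F and h=h and c=c] by simp

lemma word_expand:
  assumes "fin_supp f"
  shows "f = (\<lambda>u. \<Sum>w\<in>fsupp f. f w * fa_word w u)"
proof
  fix u
  have "(\<Sum>w\<in>fsupp f. f w * fa_word w u) = (\<Sum>w\<in>fsupp f. if w = u then f u else 0)"
    by (rule sum.cong) (auto simp: fa_word_def)
  also have "\<dots> = f u" using finite_fsupp[OF assms] by (simp add: fsupp_def)
  finally show "f u = (\<Sum>w\<in>fsupp f. f w * fa_word w u)" by simp
qed

lemma word_expand_superset:
  assumes "finite S" "fsupp f \<subseteq> S"
  shows "f = (\<lambda>u. \<Sum>w\<in>S. f w * fa_word w u)"
proof
  fix u
  have "(\<Sum>w\<in>S. f w * fa_word w u) = (\<Sum>w\<in>S. if w = u then f u else 0)"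
    by (rule sum.cong) (auto simp: fa_word_def)
  also have "\<dots> = f u" using assms by (auto simp: fsupp_def)
  finally show "f u = (\<Sum>w\<in>S. f w * fa_word w u)" by simp
qed

definition linop :: "(fa \<Rightarrow> fa) \<Rightarrow> bool" where
  "linop T \<longleftrightarrow> (\<forall>f g. fin_supp f \<longrightarrow> fin_supp g \<longrightarrow> T (f + g) = T f + T g)
     \<and> (\<forall>c f. fin_supp f \<longrightarrow> T (sm c f) = sm c (T f))
     \<and> (\<forall>f. fin_supp f \<longrightarrow> fin_supp (T f))"

lemma linopD:
  assumes "linop T"
  shows "fin_supp f \<Longrightarrow> fin_supp g \<Longrightarrow> T (f + g) = T f + T g"
    "fin_supp f \<Longrightarrow> T (sm c f) = sm c (T f)"
    "fin_supp f \<Longrightarrow> fin_supp (T f)"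
  using assms by (auto simp: linop_def)

lemma linop_zero: "linop T \<Longrightarrow> T 0 = 0"
proof -
  assume a: "linop T"
  have "T (sm 0 0) = sm 0 (T 0)" using linopD(2)[OF a, of 0 0] by simp
  moreover have "sm 0 (0::fa) = 0" "sm 0 (T 0) = 0" by (auto simp: sm_def zero_fun_def)
  ultimately show ?thesis by simp
qed

lemma linop_uminus: "linop T \<Longrightarrow> fin_supp f \<Longrightarrow> T (- f) = - T f"
proof -
  assume a: "linop T" "fin_supp f"
  have "T (sm (-1) f) = sm (-1) (T f)" using linopD(2)[OF a(1) a(2)] by simp
  moreover have "\<And>g. sm (-1) g = - g" by (rule ext) simp
  ultimately show ?thesis by simp
qed

lemma linop_diff: "linop T \<Longrightarrow> fin_supp f \<Longrightarrow> fin_supp g \<Longrightarrow> T (f - g) = T f - T g"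
  using linopD(1)[of T f "- g"] linop_uminus[of T g] by simp

lemma linop_sum:
  assumes "linop T" "finite F" "\<And>g. g \<in> F \<Longrightarrow> fin_supp (h g)"
  shows "T (\<lambda>w. \<Sum>g\<in>F. c g * h g w) = (\<lambda>w. \<Sum>g\<in>F. c g * T (h g) w)"
  using assms(2,3)
proof (induction F rule: finite_induct)
  case empty
  then show ?case using linop_zero[OF assms(1)] by (simp add: zero_fun_def)
next
  case (insert x F)
  have e1: "(\<lambda>w. \<Sum>g\<in>insert x F. c g * h g w) = sm (c x) (h x) + (\<lambda>w. \<Sum>g\<in>F. c g * h g w)"
    using insert by (auto simp: plus_fun_def)
  have e2: "(\<lambda>w. \<Sum>g\<in>insert x F. c g * T (h g) w) = sm (c x) (T (h x)) + (\<lambda>w. \<Sum>g\<in>F. c g * T (h g) w)"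
    using insert by (auto simp: plus_fun_def)
  have fs: "fin_supp (\<lambda>w. \<Sum>g\<in>F. c g * h g w)" by (rule fin_supp_sum) (use insert in auto)
  have A: "T (sm (c x) (h x) + (\<lambda>w. \<Sum>g\<in>F. c g * h g w)) = T (sm (c x) (h x)) + T (\<lambda>w. \<Sum>g\<in>F. c g * h g w)"
    by (rule linopD(1)[OF assms(1)]) (use insert fs in auto)
  have B: "T (sm (c x) (h x)) = sm (c x) (T (h x))" by (rule linopD(2)[OF assms(1)]) (use insert in auto)
  have C: "T (\<lambda>w. \<Sum>g\<in>F. c g * h g w) = (\<lambda>w. \<Sum>g\<in>F. c g * T (h g) w)"
    by (rule insert.IH) (use insert.prems in auto)
  show ?case unfolding e1 e2 A B C by (rule refl)
qed

lemma linop_comp: "linop S \<Longrightarrow> linop T \<Longrightarrow> linop (S \<circ> T)"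
  unfolding linop_def by auto

lemma linop_id: "linop id" unfolding linop_def by auto

lemma linop_add: assumes "linop S" "linop T" shows "linop (\<lambda>f. S f + T f)"
  unfolding linop_def
proof (intro conjI allI impI)
  fix f g assume "fin_supp f" "fin_supp g"
  have "S (f + g) = S f + S g" "T (f + g) = T f + T g"
    using linopD(1)[OF assms(1)] linopD(1)[OF assms(2)] \<open>fin_supp f\<close> \<open>fin_supp g\<close> by auto
  then show "S (f + g) + T (f + g) = S f + T f + (S g + T g)" by (simp add: algebra_simps)
next
  fix c f assume "fin_supp f"
  then have "S (sm c f) = sm c (S f)" "T (sm c f) = sm c (T f)"
    using linopD(2)[OF assms(1)] linopD(2)[OF assms(2)] by auto
  then show "S (sm c f) + T (sm c f) = sm c (S f + T f)" by (auto simp: sm_def algebra_simps)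
next
  fix f assume "fin_supp f"
  then have "fin_supp (S f)" "fin_supp (T f)" using linopD(3)[OF assms(1)] linopD(3)[OF assms(2)] by auto
  then show "fin_supp (S f + T f)" by simp
qed

lemma linop_subsp:
  assumes "linop T" "subsp A" "\<And>g. g \<in> S \<Longrightarrow> fin_supp g" "\<And>g. g \<in> S \<Longrightarrow> T g \<in> A"
    "f \<in> cspan S"
  shows "T f \<in> A"
proof -
  have "subsp {f. fin_supp f \<and> T f \<in> A}" unfolding subsp_def
    using linopD[OF assms(1)] linop_zero[OF assms(1)] subspD[OF assms(2)] by auto
  then have "cspan S \<subseteq> {f. fin_supp f \<and> T f \<in> A}" by (rule cspan_least) (use assms in auto)
  then show ?thesis using assms(5) by auto
qed

definition lext :: "(cur list \<Rightarrow> fa) \<Rightarrow> fa \<Rightarrow> fa" where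
  "lext F f = (\<lambda>u. \<Sum>w\<in>fsupp f. f w * F w u)"

lemma lext_superset:
  assumes "finite S" "fsupp f \<subseteq> S"
  shows "lext F f = (\<lambda>u. \<Sum>w\<in>S. f w * F w u)"
proof
  fix u
  have "(\<Sum>w\<in>S. f w * F w u) = (\<Sum>w\<in>fsupp f. f w * F w u)"
    using assms by (intro sum.mono_neutral_right) (auto simp: fsupp_def)
  then show "lext F f u = (\<Sum>w\<in>S. f w * F w u)" by (simp add: lext_def)
qed

lemma lext_word[simp]: "lext F (fa_word w) = F w"
  unfolding lext_def fsupp_def fa_word_def by (rule ext) (simp cong: if_cong)

lemma lext_linop: "(\<And>w. fin_supp (F w)) \<Longrightarrow> linop (lext F)"
  unfolding linop_def
proof (intro conjI allI impI)
  fix f g assume "fin_supp f" "fin_supp g"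
  then have fin: "finite (fsupp f \<union> fsupp g)" by (simp add: finite_fsupp)
  have s: "fsupp (f + g) \<subseteq> fsupp f \<union> fsupp g" by (auto simp: fsupp_def)
  show "lext F (f + g) = lext F f + lext F g"
    using lext_superset[OF fin s, of F] lext_superset[OF fin, of f F] lext_superset[OF fin, of g F]
    by (auto simp: plus_fun_def distrib_right sum.distrib)
next
  fix c f assume "fin_supp f"
  have "lext F (sm c f) = (\<lambda>u. \<Sum>w\<in>fsupp f. sm c f w * F w u)"
    using lext_superset[of "fsupp f" "sm c f" F] finite_fsupp[OF \<open>fin_supp f\<close>]
    by (auto simp: fsupp_def)
  then show "lext F (sm c f) = sm c (lext F f)"
    by (auto simp: sm_def lext_def sum_distrib_left mult.assoc)
next
  fix f assume "fin_supp f" "\<And>w. fin_supp (F w)"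
  then show "fin_supp (lext F f)" unfolding lext_def using fin_supp_sum[of "fsupp f" F f]
    by (simp add: finite_fsupp)
qed

lemma lext_eq_on:
  assumes "fin_supp f" "linop T" "\<And>w. T (fa_word w) = F w"
  shows "T f = lext F f"
proof -
  have "T f = T (\<lambda>u. \<Sum>w\<in>fsupp f. f w * fa_word w u)" using word_expand[OF assms(1)] by simp
  also have "\<dots> = (\<lambda>u. \<Sum>w\<in>fsupp f. f w * F w u)"
    using linop_sum[OF assms(2), of "fsupp f" fa_word f] assms by (simp add: finite_fsupp)
  finally show ?thesis by (simp add: lext_def)
qed

lemma linop_eqI:
  assumes "linop S" "linop T" "\<And>w. S (fa_word w) = T (fa_word w)" "fin_supp f"
  shows "S f = T f"
  using lext_eq_on[OF assms(4,1), of "\<lambda>w. S (fa_word w)"] lext_eq_on[OF assms(4,2), of "\<lambda>w. S (fa_word w)"]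
    assms(3) by simp

lemma linop_word_subsp:
  assumes "linop T" "subsp A" "fin_supp f" "\<And>w. T (fa_word w) \<in> A"
  shows "T f \<in> A"
proof -
  have "T f = (\<lambda>u. \<Sum>w\<in>fsupp f. f w * T (fa_word w) u)"
    using linop_sum[OF assms(1), of "fsupp f" fa_word f] word_expand[OF assms(3)] assms(3)
    by (simp add: finite_fsupp)
  then show ?thesis using subsp_sum[OF assms(2), of "fsupp f"] assms by (simp add: finite_fsupp)
qed


lemma fa_word_apply: "fa_word w u = (if u = w then 1 else 0)" by (simp add: fa_word_def)

lemma mul_word_word: "fa_mul (fa_word u) (fa_word w) = fa_word (u @ w)"
proof
  fix v
  have "fa_mul (fa_word u) (fa_word w) v = (\<Sum>p\<in>{..length v}. if p = length u \<and> v = u @ w then 1 else 0)"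
    unfolding fa_mul_def
  proof (rule sum.cong)
    fix p assume p: "p \<in> {..length v}"
    have "(take p v = u \<and> drop p v = w) \<longleftrightarrow> (p = length u \<and> v = u @ w)"
    proof
      assume a: "take p v = u \<and> drop p v = w"
      then have "v = u @ w" using append_take_drop_id[of p v] by simp
      moreover have "length u = p" using a p by auto
      ultimately show "p = length u \<and> v = u @ w" by simp
    next
      assume "p = length u \<and> v = u @ w"
      then show "take p v = u \<and> drop p v = w" by simp
    qed
    then show "fa_word u (take p v) * fa_word w (drop p v) = (if p = length u \<and> v = u @ w then 1 else 0)"
      by (auto simp: fa_word_apply)
  qed simp
  also have "\<dots> = fa_word (u @ w) v"
    by (cases "v = u @ w") (auto simp: fa_word_apply)
  finally show "fa_mul (fa_word u) (fa_word w) v = fa_word (u @ w) v" .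
qed

lemma fa_mul_sum_left:
  "finite X \<Longrightarrow> fa_mul (\<lambda>w. \<Sum>x\<in>X. c x * g x w) h = (\<lambda>w. \<Sum>x\<in>X. c x * fa_mul (g x) h w)"
  unfolding fa_mul_def by (rule ext) (simp add: sum_distrib_right sum_distrib_left mult.assoc sum.swap[of _ X])

lemma fa_mul_sum_right:
  "finite X \<Longrightarrow> fa_mul h (\<lambda>w. \<Sum>x\<in>X. c x * g x w) = (\<lambda>w. \<Sum>x\<in>X. c x * fa_mul h (g x) w)"
  unfolding fa_mul_def by (rule ext) (simp add: sum_distrib_right sum_distrib_left mult.assoc mult.left_commute sum.swap[of _ X])

lemma fa_mul_add_left: "fa_mul (f + g) h = fa_mul f h + fa_mul g h"
  unfolding fa_mul_def by (rule ext) (simp add: distrib_right sum.distrib)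
lemma fa_mul_add_right: "fa_mul h (f + g) = fa_mul h f + fa_mul h g"
  unfolding fa_mul_def by (rule ext) (simp add: distrib_left sum.distrib)
lemma fa_mul_diff_left: "fa_mul (f - g) h = fa_mul f h - fa_mul g h"
  unfolding fa_mul_def by (rule ext) (simp add: left_diff_distrib sum_subtractf)
lemma fa_mul_diff_right: "fa_mul h (f - g) = fa_mul h f - fa_mul h g"
  unfolding fa_mul_def by (rule ext) (simp add: right_diff_distrib sum_subtractf)
lemma fa_mul_sm_left: "fa_mul (sm c f) h = sm c (fa_mul f h)"
  unfolding fa_mul_def by (rule ext) (simp add: sum_distrib_left mult.assoc)
lemma fa_mul_sm_right: "fa_mul h (sm c f) = sm c (fa_mul h f)"
  unfolding fa_mul_def by (rule ext) (simp add: sum_distrib_left mult.left_commute)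
lemma fa_mul_zero_left: "fa_mul 0 h = 0"
  unfolding fa_mul_def by (rule ext) simp
lemma fa_mul_zero_right: "fa_mul h 0 = 0"
  unfolding fa_mul_def by (rule ext) simp

lemma fa_mul_expand:
  assumes "fin_supp f" "fin_supp g"
  shows "fa_mul f g = (\<lambda>v. \<Sum>u\<in>fsupp f. f u * (\<Sum>w\<in>fsupp g. g w * fa_word (u @ w) v))"
proof -
  have "fa_mul f g = fa_mul (\<lambda>v. \<Sum>u\<in>fsupp f. f u * fa_word u v) g"
    using word_expand[OF assms(1)] by simp
  also have "\<dots> = (\<lambda>v. \<Sum>u\<in>fsupp f. f u * fa_mul (fa_word u) g v)"
    by (rule fa_mul_sum_left) (rule finite_fsupp[OF assms(1)])
  also have "\<dots> = (\<lambda>v. \<Sum>u\<in>fsupp f. f u * (\<Sum>w\<in>fsupp g. g w * fa_word (u @ w) v))"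
  proof -
    have "\<And>u. fa_mul (fa_word u) g = (\<lambda>v. \<Sum>w\<in>fsupp g. g w * fa_word (u @ w) v)"
    proof -
      fix u
      have "fa_mul (fa_word u) g = fa_mul (fa_word u) (\<lambda>v. \<Sum>w\<in>fsupp g. g w * fa_word w v)"
        using word_expand[OF assms(2)] by simp
      also have "\<dots> = (\<lambda>v. \<Sum>w\<in>fsupp g. g w * fa_mul (fa_word u) (fa_word w) v)"
        by (rule fa_mul_sum_right) (rule finite_fsupp[OF assms(2)])
      finally show "fa_mul (fa_word u) g = (\<lambda>v. \<Sum>w\<in>fsupp g. g w * fa_word (u @ w) v)"
        by (simp add: mul_word_word)
    qed
    then show ?thesis by simp
  qed
  finally show ?thesis .
qed

lemma fin_supp_mul[simp]:
  assumes "fin_supp f" "fin_supp g" shows "fin_supp (fa_mul f g)"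
proof -
  have "fin_supp (\<lambda>v. \<Sum>w\<in>fsupp g. g w * fa_word (u @ w) v)" for u
    by (rule fin_supp_sum) (use finite_fsupp[OF assms(2)] in auto)
  then have "fin_supp (\<lambda>v. \<Sum>u\<in>fsupp f. f u * (\<Sum>w\<in>fsupp g. g w * fa_word (u @ w) v))"
    by (intro fin_supp_sum[where h="\<lambda>u v. \<Sum>w\<in>fsupp g. g w * fa_word (u @ w) v"]) (use finite_fsupp[OF assms(1)] in auto)
  then show ?thesis using fa_mul_expand[OF assms] by simp
qed

lemma fa_mul_assoc:
  assumes "fin_supp f" "fin_supp g" "fin_supp h"
  shows "fa_mul (fa_mul f g) h = fa_mul f (fa_mul g h)"
proof -
  have lin1: "linop (\<lambda>f. fa_mul (fa_mul f g) h)" unfolding linop_def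
    using assms by (simp add: fa_mul_add_left fa_mul_sm_left)
  have lin2: "linop (\<lambda>f. fa_mul f (fa_mul g h))" unfolding linop_def
    using assms by (simp add: fa_mul_add_left fa_mul_sm_left)
  have w: "fa_mul (fa_mul (fa_word u) g) h = fa_mul (fa_word u) (fa_mul g h)" for u
  proof -
    have lin3: "linop (\<lambda>g. fa_mul (fa_mul (fa_word u) g) h)" unfolding linop_def
      using assms by (simp add: fa_mul_add_left fa_mul_add_right fa_mul_sm_left fa_mul_sm_right)
    have lin4: "linop (\<lambda>g. fa_mul (fa_word u) (fa_mul g h))" unfolding linop_def
      using assms by (simp add: fa_mul_add_left fa_mul_add_right fa_mul_sm_left fa_mul_sm_right)
    have "fa_mul (fa_mul (fa_word u) (fa_word v)) h = fa_mul (fa_word u) (fa_mul (fa_word v) h)" for v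
    proof -
      have lin5: "linop (\<lambda>h. fa_mul (fa_mul (fa_word u) (fa_word v)) h)" unfolding linop_def
        by (simp add: fa_mul_add_right fa_mul_sm_right)
      have lin6: "linop (\<lambda>h. fa_mul (fa_word u) (fa_mul (fa_word v) h))" unfolding linop_def
        by (simp add: fa_mul_add_right fa_mul_sm_right)
      show ?thesis using linop_eqI[OF lin5 lin6 _ assms(3)] by (simp add: mul_word_word)
    qed
    then show ?thesis using linop_eqI[OF lin3 lin4 _ assms(2)] by simp
  qed
  show ?thesis using linop_eqI[OF lin1 lin2 _ assms(1)] w by simp
qed

definition lm :: "cur \<Rightarrow> fa \<Rightarrow> fa" where "lm x f = fa_mul (fa_word [x]) f"

lemma lm_word[simp]: "lm x (fa_word w) = fa_word (x # w)"
  by (simp add: lm_def mul_word_word)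

lemma linop_lm: "linop (lm x)"
  unfolding linop_def lm_def by (simp add: fa_mul_add_right fa_mul_sm_right)

lemma lm_add: "lm x (f + g) = lm x f + lm x g" by (simp add: lm_def fa_mul_add_right)
lemma lm_diff: "lm x (f - g) = lm x f - lm x g" by (simp add: lm_def fa_mul_diff_right)
lemma lm_sm: "lm x (sm c f) = sm c (lm x f)" by (simp add: lm_def fa_mul_sm_right)
lemma lm_zero: "lm x 0 = 0" by (simp add: lm_def fa_mul_zero_right)
lemma fin_supp_lm[simp]: "fin_supp f \<Longrightarrow> fin_supp (lm x f)" by (simp add: lm_def)

lemma fa_gen_word: "fa_gen x = fa_word [x]" by (simp add: fa_gen_def)


unbundle fps_syntax

section \<open>The current algebra\<close>

definition csm :: "complex \<Rightarrow> cur \<Rightarrow> cur" where "csm c x = (\<lambda>k a b. c * x k a b)"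

definition lowp :: "cur \<Rightarrow> cur" where "lowp x = (\<lambda>k a b. if b < a then x k a b else 0)"
definition upp :: "cur \<Rightarrow> cur" where "upp x = (\<lambda>k a b. if a \<le> b then x k a b else 0)"

definition Fm :: "cur \<Rightarrow> nat \<Rightarrow> nat \<Rightarrow> complex fps" where "Fm x a b = Abs_fps (\<lambda>k. x k a b)"

definition mprod :: "nat \<Rightarrow> (nat \<Rightarrow> nat \<Rightarrow> complex fps) \<Rightarrow> (nat \<Rightarrow> nat \<Rightarrow> complex fps) \<Rightarrow> nat \<Rightarrow> nat \<Rightarrow> complex fps"
  where "mprod n A B = (\<lambda>a b. \<Sum>c\<in>{1..n}. A a c * B c b)"

lemma Fm_nth[simp]: "Fm x a b $ k = x k a b" by (simp add: Fm_def)

lemma Fm_inj: assumes "Fm x = Fm y" shows "x = y"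
proof (intro ext)
  fix k a b
  have "Fm x a b $ k = Fm y a b $ k" using assms by simp
  then show "x k a b = y k a b" by simp
qed

lemma Fm_add: "Fm (x + y) = Fm x + Fm y"
  by (intro ext fps_ext) simp
lemma Fm_diff: "Fm (x - y) = Fm x - Fm y"
  by (intro ext fps_ext) simp
lemma Fm_uminus: "Fm (- x) = - Fm x"
  by (intro ext fps_ext) simp
lemma Fm_zero: "Fm 0 = 0"
  by (intro ext fps_ext) simp
lemma Fm_csm: "Fm (csm c x) = (\<lambda>a b. fps_const c * Fm x a b)"
  by (intro ext fps_ext) (simp add: csm_def)

lemma Fm_bracket: "Fm (bracket n x y) = mprod n (Fm x) (Fm y) - mprod n (Fm y) (Fm x)"
proof (intro ext fps_ext)
  fix a b k
  have "(mprod n (Fm x) (Fm y) - mprod n (Fm y) (Fm x)) a b $ k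
      = (\<Sum>c\<in>{1..n}. (Fm x a c * Fm y c b) $ k) - (\<Sum>c\<in>{1..n}. (Fm x c b * Fm y a c) $ k)"
    by (simp add: mprod_def fps_sum_nth mult.commute)
  also have "\<dots> = (\<Sum>c\<in>{1..n}. \<Sum>p\<in>{..k}. x p a c * y (k - p) c b) - (\<Sum>c\<in>{1..n}. \<Sum>p\<in>{..k}. x p c b * y (k - p) a c)"
    by (simp add: fps_mult_nth atLeast0AtMost)
  also have "\<dots> = (\<Sum>p\<in>{..k}. \<Sum>c\<in>{1..n}. x p a c * y (k - p) c b) - (\<Sum>p\<in>{..k}. \<Sum>c\<in>{1..n}. x p c b * y (k - p) a c)"
    by (rule arg_cong2[where f=minus]; rule sum.swap)
  also have "\<dots> = bracket n x y k a b"
    unfolding bracket_def by (simp add: sum_subtractf mult.commute)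
  finally show "Fm (bracket n x y) a b $ k = (mprod n (Fm x) (Fm y) - mprod n (Fm y) (Fm x)) a b $ k"
    by simp
qed

lemma mprod_assoc: "mprod n (mprod n A B) C = mprod n A (mprod n B C)"
  unfolding mprod_def by (intro ext) (simp add: sum_distrib_left sum_distrib_right mult.assoc, rule sum.swap)

lemma mprod_add_left: "mprod n (A + B) C = mprod n A C + mprod n B C"
  unfolding mprod_def by (intro ext) (simp add: distrib_right sum.distrib)
lemma mprod_add_right: "mprod n C (A + B) = mprod n C A + mprod n C B"
  unfolding mprod_def by (intro ext) (simp add: distrib_left sum.distrib)
lemma mprod_diff_left: "mprod n (A - B) C = mprod n A C - mprod n B C"
  unfolding mprod_def by (intro ext) (simp add: left_diff_distrib sum_subtractf)
lemma mprod_diff_right: "mprod n C (A - B) = mprod n C A - mprod n C B"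
  unfolding mprod_def by (intro ext) (simp add: right_diff_distrib sum_subtractf)
lemma mprod_uminus_left: "mprod n (- A) C = - mprod n A C"
  unfolding mprod_def by (intro ext) (simp add: sum_negf)
lemma mprod_uminus_right: "mprod n C (- A) = - mprod n C A"
  unfolding mprod_def by (intro ext) (simp add: sum_negf)
lemma mprod_sc_left: "mprod n (\<lambda>a b. fps_const c * A a b) C = (\<lambda>a b. fps_const c * mprod n A C a b)"
  unfolding mprod_def by (intro ext) (simp add: sum_distrib_left mult.assoc)
lemma mprod_sc_right: "mprod n C (\<lambda>a b. fps_const c * A a b) = (\<lambda>a b. fps_const c * mprod n C A a b)"
  unfolding mprod_def by (intro ext) (simp add: sum_distrib_left mult.left_commute)

lemmas Fm_simps = Fm_add Fm_diff Fm_uminus Fm_zero Fm_csm Fm_bracket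
lemmas mprod_simps = mprod_add_left mprod_add_right mprod_diff_left mprod_diff_right
   mprod_uminus_left mprod_uminus_right mprod_sc_left mprod_sc_right

lemma bracket_add_left: "bracket n (x + y) z = bracket n x z + bracket n y z"
  by (rule Fm_inj) (simp add: Fm_simps mprod_simps algebra_simps)
lemma bracket_add_right: "bracket n z (x + y) = bracket n z x + bracket n z y"
  by (rule Fm_inj) (simp add: Fm_simps mprod_simps algebra_simps)
lemma bracket_diff_left: "bracket n (x - y) z = bracket n x z - bracket n y z"
  by (rule Fm_inj) (simp add: Fm_simps mprod_simps algebra_simps)
lemma bracket_diff_right: "bracket n z (x - y) = bracket n z x - bracket n z y"
  by (rule Fm_inj) (simp add: Fm_simps mprod_simps algebra_simps)
lemma bracket_antisym: "bracket n y x = - bracket n x y"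
  by (rule Fm_inj) (simp add: Fm_simps mprod_simps algebra_simps)
lemma bracket_csm_left: "bracket n (csm c x) y = csm c (bracket n x y)"
proof (rule Fm_inj)
  show "Fm (bracket n (csm c x) y) = Fm (csm c (bracket n x y))"
    unfolding Fm_simps mprod_simps by (intro ext) (simp add: algebra_simps)
qed
lemma bracket_csm_right: "bracket n y (csm c x) = csm c (bracket n y x)"
proof (rule Fm_inj)
  show "Fm (bracket n y (csm c x)) = Fm (csm c (bracket n y x))"
    unfolding Fm_simps mprod_simps by (intro ext) (simp add: algebra_simps)
qed
lemma bracket_zero_left[simp]: "bracket n 0 y = 0"
  by (rule Fm_inj) (simp add: Fm_simps mprod_def)
lemma bracket_zero_right[simp]: "bracket n y 0 = 0"
  by (rule Fm_inj) (simp add: Fm_simps mprod_def)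

lemma jacobi: "bracket n x (bracket n y z) = bracket n (bracket n x y) z + bracket n y (bracket n x z)"
  by (rule Fm_inj) (simp add: Fm_simps mprod_simps mprod_assoc algebra_simps)

lemma valid_bound:
  assumes "valid n x" obtains K where "\<And>k a b. K < k \<Longrightarrow> x k a b = 0"
proof -
  have fin: "finite {k. x k \<noteq> (\<lambda>a b. 0)}" using assms by (simp add: valid_def)
  obtain K where K: "\<forall>k\<in>{k. x k \<noteq> (\<lambda>a b. 0)}. k \<le> K"
    using fin unfolding finite_nat_set_iff_bounded_le by (elim exE)
  show ?thesis
  proof (rule that[of K])
    fix k a b assume "K < k"
    then have "k \<notin> {k. x k \<noteq> (\<lambda>a b. 0)}" using K by auto
    then have "x k = (\<lambda>a b. 0)" by simp
    then show "x k a b = 0" by simp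
  qed
qed

lemma validI:
  assumes "\<And>k a b. K < k \<Longrightarrow> x k a b = 0"
    "\<And>k a b. a \<notin> {1..n} \<or> b \<notin> {1..n} \<Longrightarrow> x k a b = 0"
    "\<And>k. (\<Sum>a\<in>{1..n}. x k a a) = 0"
  shows "valid n x"
proof -
  have "{k. x k \<noteq> (\<lambda>a b. 0)} \<subseteq> {..K}"
  proof
    fix k assume "k \<in> {k. x k \<noteq> (\<lambda>a b. 0)}"
    then have ne: "x k \<noteq> (\<lambda>a b. 0)" by simp
    show "k \<in> {..K}"
    proof (rule ccontr)
      assume "k \<notin> {..K}"
      then have "K < k" by simp
      then have "x k = (\<lambda>a b. 0)" using assms(1) by (intro ext) 
      then show False using ne by contradiction
    qed
  qed
  then have "finite {k. x k \<noteq> (\<lambda>a b. 0)}" by (rule finite_subset) simp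
  moreover have "\<forall>k a b. (a \<notin> {1..n} \<or> b \<notin> {1..n}) \<longrightarrow> x k a b = 0" using assms(2) by blast
  moreover have "\<forall>k. (\<Sum>a\<in>{1..n}. x k a a) = 0" using assms(3) by blast
  ultimately show ?thesis unfolding valid_def by (intro conjI)
qed

lemma valid_out: "valid n x \<Longrightarrow> a \<notin> {1..n} \<or> b \<notin> {1..n} \<Longrightarrow> x k a b = 0"
  by (simp add: valid_def)
lemma valid_trace: "valid n x \<Longrightarrow> (\<Sum>a\<in>{1..n}. x k a a) = 0"
  by (simp add: valid_def)

lemma valid_add[simp]: "valid n x \<Longrightarrow> valid n y \<Longrightarrow> valid n (x + y)"
proof -
  assume a: "valid n x" "valid n y"
  obtain K1 where K1: "\<And>k a b. K1 < k \<Longrightarrow> x k a b = 0" using valid_bound[OF a(1)] by blast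
  obtain K2 where K2: "\<And>k a b. K2 < k \<Longrightarrow> y k a b = 0" using valid_bound[OF a(2)] by blast
  show ?thesis
  proof (rule validI[of "max K1 K2"])
    fix k a b assume "max K1 K2 < k" then show "(x + y) k a b = 0" using K1 K2 by simp
  next
    fix k a b assume "a \<notin> {1..n} \<or> b \<notin> {1..n}"
    then show "(x + y) k a b = 0" using valid_out[OF a(1)] valid_out[OF a(2)] by simp
  next
    fix k show "(\<Sum>a\<in>{1..n}. (x + y) k a a) = 0"
      using valid_trace[OF a(1), of k] valid_trace[OF a(2), of k] by (simp add: sum.distrib)
  qed
qed

lemma valid_csm[simp]: "valid n x \<Longrightarrow> valid n (csm c x)"
proof -
  assume a: "valid n x"
  obtain K1 where K1: "\<And>k a b. K1 < k \<Longrightarrow> x k a b = 0" using valid_bound[OF a(1)] by blast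
  show ?thesis
  proof (rule validI[of K1])
    fix k a b assume "K1 < k" then show "csm c x k a b = 0" using K1 by (simp add: csm_def)
  next
    fix k a b assume "a \<notin> {1..n} \<or> b \<notin> {1..n}"
    then show "csm c x k a b = 0" using valid_out[OF a(1)] by (simp add: csm_def)
  next
    fix k show "(\<Sum>a\<in>{1..n}. csm c x k a a) = 0"
      using valid_trace[OF a(1), of k] by (simp add: csm_def sum_distrib_left[symmetric])
  qed
qed

lemma valid_zero[simp]: "valid n 0"
  by (rule validI[of 0]) simp_all

lemma uminus_csm: "- x = csm (-1) (x::cur)" by (intro ext) (simp add: csm_def)
lemma valid_uminus[simp]: "valid n x \<Longrightarrow> valid n (- x)"
  by (simp add: uminus_csm)
lemma valid_diff[simp]: "valid n x \<Longrightarrow> valid n y \<Longrightarrow> valid n (x - y)"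
  using valid_add[of n x "- y"] by simp

lemma valid_bracket[simp]:
  assumes a: "valid n x" "valid n y" shows "valid n (bracket n x y)"
proof -
  obtain K1 where K1: "\<And>k a b. K1 < k \<Longrightarrow> x k a b = 0" using valid_bound[OF a(1)] by blast
  obtain K2 where K2: "\<And>k a b. K2 < k \<Longrightarrow> y k a b = 0" using valid_bound[OF a(2)] by blast
  show ?thesis
  proof (rule validI[of "K1 + K2"])
    fix k a b assume k: "K1 + K2 < k"
    have "\<And>p c. p \<in> {..k} \<Longrightarrow> x p a c * y (k - p) c b - y (k - p) a c * x p c b = 0"
    proof -
      fix p c assume "p \<in> {..k}"
      then have "K1 < p \<or> K2 < k - p" using k by auto
      then show "x p a c * y (k - p) c b - y (k - p) a c * x p c b = 0" using K1 K2 by auto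
    qed
    then show "bracket n x y k a b = 0" unfolding bracket_def by simp
  next
    fix k a b assume "a \<notin> {1..n} \<or> b \<notin> {1..n}"
    then show "bracket n x y k a b = 0" unfolding bracket_def
      using valid_out[OF a(1)] valid_out[OF a(2)] by auto
  next
    fix k
    have "(\<Sum>a\<in>{1..n}. bracket n x y k a a)
      = (\<Sum>a\<in>{1..n}. \<Sum>p\<in>{..k}. \<Sum>c\<in>{1..n}. x p a c * y (k - p) c a - y (k - p) a c * x p c a)"
      unfolding bracket_def by simp
    also have "\<dots> = (\<Sum>p\<in>{..k}. \<Sum>a\<in>{1..n}. \<Sum>c\<in>{1..n}. x p a c * y (k - p) c a - y (k - p) a c * x p c a)"
      by (rule sum.swap)
    also have "\<dots> = (\<Sum>p\<in>{..k}. (\<Sum>a\<in>{1..n}. \<Sum>c\<in>{1..n}. x p a c * y (k - p) c a)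
                    - (\<Sum>a\<in>{1..n}. \<Sum>c\<in>{1..n}. y (k - p) a c * x p c a))"
      by (simp add: sum_subtractf)
    also have "\<dots> = 0"
    proof (rule sum.neutral, rule ballI)
      fix p
      have "(\<Sum>a\<in>{1..n}. \<Sum>c\<in>{1..n}. y (k - p) a c * x p c a) = (\<Sum>c\<in>{1..n}. \<Sum>a\<in>{1..n}. y (k - p) a c * x p c a)"
        by (rule sum.swap)
      then show "(\<Sum>a\<in>{1..n}. \<Sum>c\<in>{1..n}. x p a c * y (k - p) c a)
                    - (\<Sum>a\<in>{1..n}. \<Sum>c\<in>{1..n}. y (k - p) a c * x p c a) = 0"
        by (simp add: mult.commute)
    qed
    finally show "(\<Sum>a\<in>{1..n}. bracket n x y k a a) = 0" .
  qed
qed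

lemma valid_lowp[simp]: "valid n x \<Longrightarrow> valid n (lowp x)"
proof -
  assume a: "valid n x"
  obtain K1 where K1: "\<And>k a b. K1 < k \<Longrightarrow> x k a b = 0" using valid_bound[OF a(1)] by blast
  show ?thesis
  proof (rule validI[of K1])
    fix k a b assume "K1 < k" then show "lowp x k a b = 0" using K1 by (simp add: lowp_def)
  next
    fix k a b assume "a \<notin> {1..n} \<or> b \<notin> {1..n}"
    then show "lowp x k a b = 0" using valid_out[OF a(1)] by (simp add: lowp_def)
  next
    fix k show "(\<Sum>a\<in>{1..n}. lowp x k a a) = 0" by (simp add: lowp_def)
  qed
qed

lemma valid_upp[simp]: "valid n x \<Longrightarrow> valid n (upp x)"
proof -
  assume a: "valid n x"
  obtain K1 where K1: "\<And>k a b. K1 < k \<Longrightarrow> x k a b = 0" using valid_bound[OF a(1)] by blast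
  show ?thesis
  proof (rule validI[of K1])
    fix k a b assume "K1 < k" then show "upp x k a b = 0" using K1 by (simp add: upp_def)
  next
    fix k a b assume "a \<notin> {1..n} \<or> b \<notin> {1..n}"
    then show "upp x k a b = 0" using valid_out[OF a(1)] by (simp add: upp_def)
  next
    fix k show "(\<Sum>a\<in>{1..n}. upp x k a a) = 0" using valid_trace[OF a(1), of k] by (simp add: upp_def)
  qed
qed

lemma low_up_split: "x = lowp x + upp x"
  by (intro ext) (simp add: lowp_def upp_def)

lemma lowp_add: "lowp (x + y) = lowp x + lowp y" by (intro ext) (simp add: lowp_def)
lemma upp_add: "upp (x + y) = upp x + upp y" by (intro ext) (simp add: upp_def)
lemma lowp_csm: "lowp (csm c x) = csm c (lowp x)" by (intro ext) (simp add: lowp_def csm_def)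
lemma upp_csm: "upp (csm c x) = csm c (upp x)" by (intro ext) (simp add: upp_def csm_def)
lemma lowp_diff: "lowp (x - y) = lowp x - lowp y" by (intro ext) (simp add: lowp_def)
lemma upp_diff: "upp (x - y) = upp x - upp y" by (intro ext) (simp add: upp_def)
lemma lowp_zero[simp]: "lowp 0 = 0" by (intro ext) (simp add: lowp_def)
lemma upp_zero[simp]: "upp 0 = 0" by (intro ext) (simp add: upp_def)

lemma in_nminus_lowp[simp]: "in_nminus (lowp x)" by (simp add: in_nminus_def lowp_def)
lemma in_bplus_upp[simp]: "in_bplus (upp x)" by (simp add: in_bplus_def upp_def)

lemma nminus_zero: "in_nminus x \<Longrightarrow> \<not> b < a \<Longrightarrow> x k a b = 0"
  unfolding in_nminus_def by blast
lemma bplus_zero: "in_bplus x \<Longrightarrow> \<not> a \<le> b \<Longrightarrow> x k a b = 0"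
  unfolding in_bplus_def by blast
lemma lowp_nminus: "in_nminus x \<Longrightarrow> lowp x = x"
  by (intro ext) (auto simp: lowp_def dest: nminus_zero)
lemma upp_nminus: "in_nminus x \<Longrightarrow> upp x = 0"
  by (intro ext) (simp add: upp_def nminus_zero)
lemma upp_bplus: "in_bplus x \<Longrightarrow> upp x = x"
  by (intro ext) (auto simp: upp_def dest: bplus_zero)
lemma lowp_bplus: "in_bplus x \<Longrightarrow> lowp x = 0"
  by (intro ext) (simp add: lowp_def bplus_zero)

lemma nminus_bracket: assumes "in_nminus x" "in_nminus y" shows "in_nminus (bracket n x y)"
  unfolding in_nminus_def
proof (intro allI impI)
  fix k a b assume ne: "bracket n x y k a b \<noteq> 0"
  show "b < a"
  proof (rule ccontr)
    assume nb: "\<not> b < a"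
    have "x p a c * y (k - p) c b - y (k - p) a c * x p c b = 0" for p c
    proof -
      have 1: "x p a c * y (k - p) c b = 0"
      proof (cases "c < a")
        case True then have "\<not> b < c" using nb by simp
        then show ?thesis using nminus_zero[OF assms(2)] by simp
      next
        case False then show ?thesis using nminus_zero[OF assms(1)] by simp
      qed
      have 2: "y (k - p) a c * x p c b = 0"
      proof (cases "c < a")
        case True then have "\<not> b < c" using nb by simp
        then show ?thesis using nminus_zero[OF assms(1)] by simp
      next
        case False then show ?thesis using nminus_zero[OF assms(2)] by simp
      qed
      show ?thesis using 1 2 by (simp only: diff_self)
    qed
    then show False using ne unfolding bracket_def by simp
  qed
qed

lemma bplus_bracket: assumes "in_bplus x" "in_bplus y" shows "in_bplus (bracket n x y)"
  unfolding in_bplus_def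
proof (intro allI impI)
  fix k a b assume ne: "bracket n x y k a b \<noteq> 0"
  show "a \<le> b"
  proof (rule ccontr)
    assume nb: "\<not> a \<le> b"
    have "x p a c * y (k - p) c b - y (k - p) a c * x p c b = 0" for p c
    proof -
      have 1: "x p a c * y (k - p) c b = 0"
      proof (cases "a \<le> c")
        case True then have "\<not> c \<le> b" using nb by simp
        then show ?thesis using bplus_zero[OF assms(2)] by simp
      next
        case False then show ?thesis using bplus_zero[OF assms(1)] by simp
      qed
      have 2: "y (k - p) a c * x p c b = 0"
      proof (cases "a \<le> c")
        case True then have "\<not> c \<le> b" using nb by simp
        then show ?thesis using bplus_zero[OF assms(1)] by simp
      next
        case False then show ?thesis using bplus_zero[OF assms(2)] by simp
      qed
      show ?thesis using 1 2 by (simp only: diff_self)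
    qed
    then show False using ne unfolding bracket_def by simp
  qed
qed

lemma in_nminus_add: "in_nminus x \<Longrightarrow> in_nminus y \<Longrightarrow> in_nminus (x + y)"
  unfolding in_nminus_def by (metis add.right_neutral plus_fun_apply)
lemma in_bplus_add: "in_bplus x \<Longrightarrow> in_bplus y \<Longrightarrow> in_bplus (x + y)"
  unfolding in_bplus_def by (metis add.right_neutral plus_fun_apply)
lemma in_nminus_csm: "in_nminus x \<Longrightarrow> in_nminus (csm c x)"
  by (auto simp: in_nminus_def csm_def)
lemma in_bplus_csm: "in_bplus x \<Longrightarrow> in_bplus (csm c x)"
  by (auto simp: in_bplus_def csm_def)
lemma in_nminus_zero[simp]: "in_nminus 0" by (simp add: in_nminus_def)
lemma in_bplus_zero[simp]: "in_bplus 0" by (simp add: in_bplus_def)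


lemma linop_diff_op: "linop S \<Longrightarrow> linop T \<Longrightarrow> linop (\<lambda>f. S f - T f)"
proof -
  assume a: "linop S" "linop T"
  have e: "(\<lambda>f. S f - T f) = (\<lambda>f. S f + (\<lambda>f. sm (-1) (T f)) f)" by (intro ext) simp
  have "linop (\<lambda>f. sm (-1) (T f))" unfolding linop_def using linopD[OF a(2)] by (simp add: fun_eq_iff algebra_simps)
  then show ?thesis unfolding e by (rule linop_add[OF a(1)])
qed

lemma linop_sm_op: "linop T \<Longrightarrow> linop (\<lambda>f. sm c (T f))"
  unfolding linop_def by (simp add: fun_eq_iff algebra_simps)

lemma linop_comp': "linop S \<Longrightarrow> linop T \<Longrightarrow> linop (\<lambda>f. S (T f))"
  using linop_comp[of S T] by (simp add: comp_def)

lemma span_lin: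
  assumes "f \<in> cspan S" "linop T" "subsp A" "\<And>g. g \<in> S \<Longrightarrow> fin_supp g" "\<And>g. g \<in> S \<Longrightarrow> T g \<in> A"
  shows "T f \<in> A"
  using linop_subsp[OF assms(2,3,4,5,1)] .

locale ca = fixes n :: nat
begin

abbreviation br where "br \<equiv> bracket n"
definition NM :: "cur \<Rightarrow> bool" where "NM x \<longleftrightarrow> valid n x \<and> in_nminus x"
definition BP :: "cur \<Rightarrow> bool" where "BP x \<longleftrightarrow> valid n x \<and> in_bplus x"
definition nwords :: "cur list set" where "nwords = {w. \<forall>x\<in>set w. NM x}"

definition V :: "fa set" where "V = Nminus n"

definition KG :: "fa set" where
  "KG = {fa_word (u @ (x + y) # w) - fa_word (u @ x # w) - fa_word (u @ y # w) | u x y w.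
           u \<in> nwords \<and> w \<in> nwords \<and> NM x \<and> NM y}
      \<union> {fa_word (u @ csm c x # w) - sm c (fa_word (u @ x # w)) | u c x w.
           u \<in> nwords \<and> w \<in> nwords \<and> NM x}
      \<union> {fa_word (u @ x # y # w) - fa_word (u @ y # x # w) - fa_word (u @ br x y # w) | u x y w.
           u \<in> nwords \<and> w \<in> nwords \<and> NM x \<and> NM y}"

definition K :: "fa set" where "K = cspan KG"

lemma NM_valid: "NM x \<Longrightarrow> valid n x" by (simp add: NM_def)
lemma BP_valid: "BP x \<Longrightarrow> valid n x" by (simp add: BP_def)
lemma NM_lowp[simp]: "valid n x \<Longrightarrow> NM (lowp x)" by (simp add: NM_def)
lemma BP_upp[simp]: "valid n x \<Longrightarrow> BP (upp x)" by (simp add: BP_def)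
lemma NM_zero[simp]: "NM 0" by (simp add: NM_def)
lemma NM_add: "NM x \<Longrightarrow> NM y \<Longrightarrow> NM (x + y)" by (simp add: NM_def in_nminus_add)
lemma NM_csm: "NM x \<Longrightarrow> NM (csm c x)" by (simp add: NM_def in_nminus_csm)
lemma NM_br: "NM x \<Longrightarrow> NM y \<Longrightarrow> NM (br x y)" by (simp add: NM_def nminus_bracket)
lemma BP_br: "BP x \<Longrightarrow> BP y \<Longrightarrow> BP (br x y)" by (simp add: BP_def bplus_bracket)

lemma nwords_Cons[simp]: "x # w \<in> nwords \<longleftrightarrow> NM x \<and> w \<in> nwords" by (simp add: nwords_def)
lemma nwords_Nil[simp]: "[] \<in> nwords" by (simp add: nwords_def)
lemma nwords_append[simp]: "u @ w \<in> nwords \<longleftrightarrow> u \<in> nwords \<and> w \<in> nwords" by (auto simp: nwords_def)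

lemma V_def': "V = cspan {fa_word w | w. w \<in> nwords}"
  unfolding V_def Nminus_def nwords_def NM_def by simp

lemma subsp_V: "subsp V" unfolding V_def' by (rule subsp_cspan)
lemma subsp_K: "subsp K" unfolding K_def by (rule subsp_cspan)

lemma word_V: "w \<in> nwords \<Longrightarrow> fa_word w \<in> V" unfolding V_def' by (rule cspan_base) blast

lemma fin_supp_V: "f \<in> V \<Longrightarrow> fin_supp f"
  unfolding V_def' by (rule fin_supp_cspan) auto

lemmas K0 = subspD(1)[OF subsp_K]
lemmas Kadd = subspD(2)[OF subsp_K]
lemmas Ksm = subspD(3)[OF subsp_K]
lemmas Kdiff = subsp_diff[OF subsp_K]
lemmas Kuminus = subsp_uminus[OF subsp_K]
lemmas V0 = subspD(1)[OF subsp_V]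
lemmas Vadd = subspD(2)[OF subsp_V]
lemmas Vsm = subspD(3)[OF subsp_V]
lemmas Vdiff = subsp_diff[OF subsp_V]

lemma KG_V: "g \<in> KG \<Longrightarrow> g \<in> V"
  unfolding KG_def
proof (elim UnE CollectE exE conjE)
  fix u y z w assume "g = fa_word (u @ (y + z) # w) - fa_word (u @ y # w) - fa_word (u @ z # w)"
    "u \<in> nwords" "w \<in> nwords" "NM y" "NM z"
  then show "g \<in> V" by (simp add: Vdiff word_V NM_add)
next
  fix u c y w assume "g = fa_word (u @ csm c y # w) - sm c (fa_word (u @ y # w))"
    "u \<in> nwords" "w \<in> nwords" "NM y"
  then show "g \<in> V" by (simp add: Vdiff Vsm word_V NM_csm)
next
  fix u y z w assume "g = fa_word (u @ y # z # w) - fa_word (u @ z # y # w) - fa_word (u @ br y z # w)"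
    "u \<in> nwords" "w \<in> nwords" "NM y" "NM z"
  then show "g \<in> V" by (simp add: Vdiff word_V NM_br)
qed

lemma K_V: "f \<in> K \<Longrightarrow> f \<in> V"
  unfolding K_def using cspan_least[OF subsp_V, of KG] KG_V by auto

lemma fin_supp_K: "f \<in> K \<Longrightarrow> fin_supp f" using K_V fin_supp_V by blast

lemma KG_K: "g \<in> KG \<Longrightarrow> g \<in> K" unfolding K_def by (rule cspan_base)

lemma K_gen1: "u \<in> nwords \<Longrightarrow> w \<in> nwords \<Longrightarrow> NM x \<Longrightarrow> NM y \<Longrightarrow>
   fa_word (u @ (x + y) # w) - fa_word (u @ x # w) - fa_word (u @ y # w) \<in> K"
  by (rule KG_K) (unfold KG_def, rule UnI1, rule UnI1, blast)
lemma K_gen2: "u \<in> nwords \<Longrightarrow> w \<in> nwords \<Longrightarrow> NM x \<Longrightarrow>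
   fa_word (u @ csm c x # w) - sm c (fa_word (u @ x # w)) \<in> K"
  by (rule KG_K) (unfold KG_def, rule UnI1, rule UnI2, blast)
lemma K_gen3: "u \<in> nwords \<Longrightarrow> w \<in> nwords \<Longrightarrow> NM x \<Longrightarrow> NM y \<Longrightarrow>
   fa_word (u @ x # y # w) - fa_word (u @ y # x # w) - fa_word (u @ br x y # w) \<in> K"
  by (rule KG_K) (unfold KG_def, rule UnI2, blast)

lemma csm_zero: "csm 0 x = 0" by (intro ext) (simp add: csm_def)
lemma sm_zero: "sm 0 f = 0" by (intro ext) simp

lemma K_zero_letter: "u \<in> nwords \<Longrightarrow> w \<in> nwords \<Longrightarrow> fa_word (u @ 0 # w) \<in> K"
  using K_gen2[of u w 0 0] by (simp add: csm_zero sm_zero)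

lemma lm_V: "NM x \<Longrightarrow> f \<in> V \<Longrightarrow> lm x f \<in> V"
  unfolding V_def' by (rule linop_subsp[OF linop_lm subsp_cspan]) (auto intro!: cspan_base)

lemma lm_word_app: "lm x (fa_word (u @ w)) = fa_word ((x # u) @ w)" by simp

lemma lm_KG: "NM x \<Longrightarrow> g \<in> KG \<Longrightarrow> lm x g \<in> K"
proof -
  assume x: "NM x" and g: "g \<in> KG"
  from g show ?thesis unfolding KG_def
  proof (elim UnE CollectE exE conjE)
    fix u y z w assume "g = fa_word (u @ (y + z) # w) - fa_word (u @ y # w) - fa_word (u @ z # w)"
      "u \<in> nwords" "w \<in> nwords" "NM y" "NM z"
    then show "lm x g \<in> K" using K_gen1[of "x # u" w y z] x by (simp add: lm_diff)
  next
    fix u c y w assume "g = fa_word (u @ csm c y # w) - sm c (fa_word (u @ y # w))"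
      "u \<in> nwords" "w \<in> nwords" "NM y"
    then show "lm x g \<in> K" using K_gen2[of "x # u" w y c] x by (simp add: lm_diff lm_sm)
  next
    fix u y z w assume "g = fa_word (u @ y # z # w) - fa_word (u @ z # y # w) - fa_word (u @ br y z # w)"
      "u \<in> nwords" "w \<in> nwords" "NM y" "NM z"
    then show "lm x g \<in> K" using K_gen3[of "x # u" w y z] x by (simp add: lm_diff)
  qed
qed

lemma lm_K: "NM x \<Longrightarrow> f \<in> K \<Longrightarrow> lm x f \<in> K"
proof -
  assume x: "NM x" and f: "f \<in> K"
  have "f \<in> cspan KG" using f by (simp add: K_def)
  then show ?thesis
    by (rule span_lin[OF _ linop_lm subsp_K]) (use x in \<open>auto intro: fin_supp_K KG_K lm_KG\<close>)
qed

lemma lm_add_letter: "NM x \<Longrightarrow> NM y \<Longrightarrow> f \<in> V \<Longrightarrow> lm (x + y) f - lm x f - lm y f \<in> K"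
proof -
  assume x: "NM x" and y: "NM y" and f: "f \<in> V"
  have lin: "linop (\<lambda>f. lm (x + y) f - lm x f - lm y f)"
    by (intro linop_diff_op linop_lm)
  show ?thesis using f unfolding V_def'
    by (rule span_lin[OF _ lin subsp_K]) (use K_gen1[of "[]" _ x y] x y in auto)
qed

lemma lm_sm_letter: "NM x \<Longrightarrow> f \<in> V \<Longrightarrow> lm (csm c x) f - sm c (lm x f) \<in> K"
proof -
  assume x: "NM x" and f: "f \<in> V"
  have lin: "linop (\<lambda>f. lm (csm c x) f - sm c (lm x f))"
    by (intro linop_diff_op linop_lm linop_sm_op[OF linop_lm])
  show ?thesis using f unfolding V_def'
    by (rule span_lin[OF _ lin subsp_K]) (use K_gen2[of "[]" _ x c] x in auto)
qed

lemma lm_comm: "NM x \<Longrightarrow> NM y \<Longrightarrow> f \<in> V \<Longrightarrow> lm x (lm y f) - lm y (lm x f) - lm (br x y) f \<in> K"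
proof -
  assume x: "NM x" and y: "NM y" and f: "f \<in> V"
  have lin: "linop (\<lambda>f. lm x (lm y f) - lm y (lm x f) - lm (br x y) f)"
    by (intro linop_diff_op linop_lm linop_comp'[OF linop_lm linop_lm])
  show ?thesis using f unfolding V_def'
    by (rule span_lin[OF _ lin subsp_K]) (use K_gen3[of "[]" _ x y] x y in auto)
qed

lemma lm_zero_letter: "f \<in> V \<Longrightarrow> lm 0 f \<in> K"
proof -
  assume f: "f \<in> V"
  show ?thesis using f unfolding V_def'
    by (rule span_lin[OF _ linop_lm subsp_K]) (use K_zero_letter[of "[]"] in auto)
qed

end


context ca
begin

primrec Rw :: "cur list \<Rightarrow> cur \<Rightarrow> fa" where
  "Rw [] b = 0"
| "Rw (x # w) b = lm x (Rw w b) + fa_word (lowp (br b x) # w) + Rw w (upp (br b x))"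

definition R :: "cur \<Rightarrow> fa \<Rightarrow> fa" where "R b f = lext (\<lambda>w. Rw w b) f"

definition rho :: "cur \<Rightarrow> fa \<Rightarrow> fa" where "rho z f = lm (lowp z) f + R (upp z) f"

lemma fin_supp_Rw: "fin_supp (Rw w b)"
  by (induction w arbitrary: b) simp_all

lemma linop_R: "linop (R b)"
  unfolding R_def[abs_def] by (rule lext_linop) (rule fin_supp_Rw)

lemma R_word: "R b (fa_word w) = Rw w b" by (simp add: R_def)

lemma linop_rho: "linop (rho z)"
  unfolding rho_def[abs_def] by (rule linop_add[OF linop_lm linop_R])

lemma R1: "fin_supp f \<Longrightarrow> R b (lm x f) = lm x (R b f) + rho (br b x) f"
proof -
  assume f: "fin_supp f"
  have l1: "linop (\<lambda>f. R b (lm x f))" by (rule linop_comp'[OF linop_R linop_lm])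
  have l2: "linop (\<lambda>f. lm x (R b f) + rho (br b x) f)"
    by (rule linop_add[OF linop_comp'[OF linop_lm linop_R] linop_rho])
  show ?thesis
    by (rule linop_eqI[OF l1 l2 _ f]) (simp add: R_word rho_def add.assoc)
qed

lemma R_zero_vec: "R b 0 = 0" using linop_zero[OF linop_R] .
lemma R_add: "fin_supp f \<Longrightarrow> fin_supp g \<Longrightarrow> R b (f + g) = R b f + R b g" using linopD(1)[OF linop_R] .
lemma R_diff: "fin_supp f \<Longrightarrow> fin_supp g \<Longrightarrow> R b (f - g) = R b f - R b g" using linop_diff[OF linop_R] .
lemma R_sm: "fin_supp f \<Longrightarrow> R b (sm c f) = sm c (R b f)" using linopD(2)[OF linop_R] .
lemma fin_supp_R[simp]: "fin_supp f \<Longrightarrow> fin_supp (R b f)" using linopD(3)[OF linop_R] .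
lemma rho_add_vec: "fin_supp f \<Longrightarrow> fin_supp g \<Longrightarrow> rho b (f + g) = rho b f + rho b g" using linopD(1)[OF linop_rho] .
lemma rho_diff_vec: "fin_supp f \<Longrightarrow> fin_supp g \<Longrightarrow> rho b (f - g) = rho b f - rho b g" using linop_diff[OF linop_rho] .
lemma rho_sm_vec: "fin_supp f \<Longrightarrow> rho b (sm c f) = sm c (rho b f)" using linopD(2)[OF linop_rho] .
lemma fin_supp_rho[simp]: "fin_supp f \<Longrightarrow> fin_supp (rho b f)" using linopD(3)[OF linop_rho] .

lemma Rw_V: "w \<in> nwords \<Longrightarrow> valid n b \<Longrightarrow> Rw w b \<in> V"
proof (induction w arbitrary: b)
  case Nil then show ?case using V0 by (simp add: zero_fun_def)
next
  case (Cons x w)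
  have "lm x (Rw w b) \<in> V" using Cons by (simp add: lm_V)
  moreover have "fa_word (lowp (br b x) # w) \<in> V" using Cons by (intro word_V) (simp add: NM_valid)
  moreover have "Rw w (upp (br b x)) \<in> V" using Cons by (intro Cons.IH) (simp_all add: NM_valid)
  ultimately show ?case by (simp only: Rw.simps, intro Vadd)
qed

lemma R_V: "valid n b \<Longrightarrow> f \<in> V \<Longrightarrow> R b f \<in> V"
  unfolding V_def' by (rule span_lin[OF _ linop_R subsp_V[unfolded V_def']]) (auto simp: R_word Rw_V[unfolded V_def'])

lemma rho_V: "valid n z \<Longrightarrow> f \<in> V \<Longrightarrow> rho z f \<in> V"
  unfolding rho_def by (simp add: Vadd lm_V R_V)

lemma Rw_add_b: "w \<in> nwords \<Longrightarrow> valid n b1 \<Longrightarrow> valid n b2 \<Longrightarrow> Rw w (b1 + b2) - Rw w b1 - Rw w b2 \<in> K"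
proof (induction w arbitrary: b1 b2)
  case Nil then show ?case using K0 by (simp add: zero_fun_def)
next
  case (Cons x w)
  have x: "NM x" "valid n x" and w: "w \<in> nwords" using Cons.prems by (auto simp: NM_valid)
  have A: "lm x (Rw w (b1 + b2) - Rw w b1 - Rw w b2) \<in> K"
    by (rule lm_K[OF x(1) Cons.IH[OF w Cons.prems(2,3)]])
  have B: "fa_word ((lowp (br b1 x) + lowp (br b2 x)) # w) - fa_word (lowp (br b1 x) # w) - fa_word (lowp (br b2 x) # w) \<in> K"
    using K_gen1[of "[]" w "lowp (br b1 x)" "lowp (br b2 x)"] Cons x w by simp
  have C: "Rw w (upp (br b1 x) + upp (br b2 x)) - Rw w (upp (br b1 x)) - Rw w (upp (br b2 x)) \<in> K"
    by (rule Cons.IH[OF w]) (simp_all add: Cons.prems x)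
  have e: "Rw (x # w) (b1 + b2) - Rw (x # w) b1 - Rw (x # w) b2 =
     lm x (Rw w (b1 + b2) - Rw w b1 - Rw w b2)
     + (fa_word ((lowp (br b1 x) + lowp (br b2 x)) # w) - fa_word (lowp (br b1 x) # w) - fa_word (lowp (br b2 x) # w))
     + (Rw w (upp (br b1 x) + upp (br b2 x)) - Rw w (upp (br b1 x)) - Rw w (upp (br b2 x)))"
    by (simp add: bracket_add_left lowp_add upp_add lm_diff lm_add algebra_simps)
  show ?case unfolding e using A B C by (intro Kadd)
qed

lemma Rw_sm_b: "w \<in> nwords \<Longrightarrow> valid n b \<Longrightarrow> Rw w (csm c b) - sm c (Rw w b) \<in> K"
proof (induction w arbitrary: b)
  case Nil then show ?case using K0 by (simp add: zero_fun_def)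
next
  case (Cons x w)
  have x: "NM x" "valid n x" and w: "w \<in> nwords" using Cons.prems by (auto simp: NM_valid)
  have A: "lm x (Rw w (csm c b) - sm c (Rw w b)) \<in> K"
    by (rule lm_K[OF x(1) Cons.IH[OF w Cons.prems(2)]])
  have B: "fa_word (csm c (lowp (br b x)) # w) - sm c (fa_word (lowp (br b x) # w)) \<in> K"
    using K_gen2[of "[]" w "lowp (br b x)" c] Cons x w by simp
  have C: "Rw w (csm c (upp (br b x))) - sm c (Rw w (upp (br b x))) \<in> K"
    by (rule Cons.IH[OF w]) (simp_all add: Cons.prems x)
  have e: "Rw (x # w) (csm c b) - sm c (Rw (x # w) b) =
     lm x (Rw w (csm c b) - sm c (Rw w b))
     + (fa_word (csm c (lowp (br b x)) # w) - sm c (fa_word (lowp (br b x) # w)))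
     + (Rw w (csm c (upp (br b x))) - sm c (Rw w (upp (br b x))))"
  proof -
    have "sm c (Rw (x # w) b) = lm x (sm c (Rw w b)) + sm c (fa_word (lowp (br b x) # w)) + sm c (Rw w (upp (br b x)))"
      by (simp add: lm_sm fun_eq_iff algebra_simps)
    then show ?thesis
      by (simp add: bracket_csm_left lowp_csm upp_csm lm_diff algebra_simps)
  qed
  show ?case unfolding e using A B C by (intro Kadd)
qed

lemma R_add_b: "valid n b1 \<Longrightarrow> valid n b2 \<Longrightarrow> f \<in> V \<Longrightarrow> R (b1 + b2) f - R b1 f - R b2 f \<in> K"
  unfolding V_def'
  by (rule span_lin[OF _ linop_diff_op[OF linop_diff_op[OF linop_R linop_R] linop_R] subsp_K])
     (auto simp: R_word Rw_add_b)

lemma R_sm_b: "valid n b \<Longrightarrow> f \<in> V \<Longrightarrow> R (csm c b) f - sm c (R b f) \<in> K"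
  unfolding V_def'
  by (rule span_lin[OF _ linop_diff_op[OF linop_R linop_sm_op[OF linop_R]] subsp_K])
     (auto simp: R_word Rw_sm_b)

lemma R_zero_b: "f \<in> V \<Longrightarrow> R 0 f \<in> K"
  using R_sm_b[of 0 f 0] by (simp add: csm_zero sm_zero)

end


context ca
begin

definition eqK :: "fa \<Rightarrow> fa \<Rightarrow> bool" (infix "\<approx>" 50) where "f \<approx> g \<longleftrightarrow> f - g \<in> K"

lemma eqK_refl[simp]: "f \<approx> f" by (simp add: eqK_def K0)
lemma eqK_eq: "f = g \<Longrightarrow> f \<approx> g" by simp
lemma eqK_sym: "f \<approx> g \<Longrightarrow> g \<approx> f"
  unfolding eqK_def using Kuminus by fastforce
lemma eqK_trans[trans]: "f \<approx> g \<Longrightarrow> g \<approx> h \<Longrightarrow> f \<approx> h"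
proof -
  assume "f \<approx> g" "g \<approx> h"
  then have "(f - g) + (g - h) \<in> K" unfolding eqK_def by (rule Kadd)
  then show ?thesis unfolding eqK_def by simp
qed
lemma eqK_trans1[trans]: "f = g \<Longrightarrow> g \<approx> h \<Longrightarrow> f \<approx> h" by simp
lemma eqK_trans2[trans]: "f \<approx> g \<Longrightarrow> g = h \<Longrightarrow> f \<approx> h" by simp

lemma eqK_add: "f1 \<approx> g1 \<Longrightarrow> f2 \<approx> g2 \<Longrightarrow> f1 + f2 \<approx> g1 + g2"
proof -
  assume "f1 \<approx> g1" "f2 \<approx> g2"
  then have "(f1 - g1) + (f2 - g2) \<in> K" unfolding eqK_def by (rule Kadd)
  then show ?thesis unfolding eqK_def by (simp add: algebra_simps)
qed
lemma eqK_diff: "f1 \<approx> g1 \<Longrightarrow> f2 \<approx> g2 \<Longrightarrow> f1 - f2 \<approx> g1 - g2"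
proof -
  assume "f1 \<approx> g1" "f2 \<approx> g2"
  then have "(f1 - g1) - (f2 - g2) \<in> K" unfolding eqK_def by (rule Kdiff)
  then show ?thesis unfolding eqK_def by (simp add: algebra_simps)
qed
lemma eqK_sm: "f \<approx> g \<Longrightarrow> sm c f \<approx> sm c g"
proof -
  assume "f \<approx> g"
  then have "sm c (f - g) \<in> K" unfolding eqK_def by (rule Ksm)
  moreover have "sm c (f - g) = sm c f - sm c g" by (simp add: fun_eq_iff algebra_simps)
  ultimately show ?thesis unfolding eqK_def by simp
qed
lemma eqK_0: "f \<in> K \<longleftrightarrow> f \<approx> 0" by (simp add: eqK_def)
lemma eqK_K: "f \<approx> g \<Longrightarrow> f - g \<in> K" by (simp add: eqK_def)

lemma eqK_lm: "NM x \<Longrightarrow> f \<approx> g \<Longrightarrow> lm x f \<approx> lm x g"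
  unfolding eqK_def by (simp add: lm_K lm_diff[symmetric])

lemma eqK_addL: "f1 \<approx> g1 \<Longrightarrow> f1 + f2 \<approx> g1 + f2" by (rule eqK_add) simp_all
lemma eqK_addR: "f2 \<approx> g2 \<Longrightarrow> f1 + f2 \<approx> f1 + g2" by (rule eqK_add) simp_all

lemma fin_supp_V'[simp]: "f \<in> V \<Longrightarrow> fin_supp f" by (rule fin_supp_V)

section \<open>rho is linear modulo K\<close>

lemma rho_add: "valid n z1 \<Longrightarrow> valid n z2 \<Longrightarrow> f \<in> V \<Longrightarrow> rho (z1 + z2) f \<approx> rho z1 f + rho z2 f"
proof -
  assume z: "valid n z1" "valid n z2" and f: "f \<in> V"
  have A: "lm (lowp z1 + lowp z2) f - lm (lowp z1) f - lm (lowp z2) f \<in> K"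
    using z f by (intro lm_add_letter) simp_all
  have B: "R (upp z1 + upp z2) f - R (upp z1) f - R (upp z2) f \<in> K"
    using z f by (intro R_add_b) simp_all
  have "rho (z1 + z2) f - (rho z1 f + rho z2 f) =
    (lm (lowp z1 + lowp z2) f - lm (lowp z1) f - lm (lowp z2) f) + (R (upp z1 + upp z2) f - R (upp z1) f - R (upp z2) f)"
    by (simp add: rho_def lowp_add upp_add algebra_simps)
  then show ?thesis unfolding eqK_def using Kadd[OF A B] by simp
qed

lemma rho_sm: "valid n z \<Longrightarrow> f \<in> V \<Longrightarrow> rho (csm c z) f \<approx> sm c (rho z f)"
proof -
  assume z: "valid n z" and f: "f \<in> V"
  have A: "lm (csm c (lowp z)) f - sm c (lm (lowp z) f) \<in> K"
    using z f by (intro lm_sm_letter) simp_all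
  have B: "R (csm c (upp z)) f - sm c (R (upp z) f) \<in> K"
    using z f by (intro R_sm_b) simp_all
  have "rho (csm c z) f - sm c (rho z f) =
    (lm (csm c (lowp z)) f - sm c (lm (lowp z) f)) + (R (csm c (upp z)) f - sm c (R (upp z) f))"
    by (simp add: rho_def lowp_csm upp_csm fun_eq_iff algebra_simps)
  then show ?thesis unfolding eqK_def using Kadd[OF A B] by simp
qed

lemma rho_zero: "f \<in> V \<Longrightarrow> rho 0 f \<approx> 0"
proof -
  assume f: "f \<in> V"
  have "lm 0 f + R 0 f \<in> K" using f by (intro Kadd lm_zero_letter R_zero_b)
  then show ?thesis by (simp add: rho_def eqK_def)
qed

lemma rho_diff: "valid n z1 \<Longrightarrow> valid n z2 \<Longrightarrow> f \<in> V \<Longrightarrow> rho (z1 - z2) f \<approx> rho z1 f - rho z2 f"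
proof -
  assume z: "valid n z1" "valid n z2" and f: "f \<in> V"
  have "rho ((z1 - z2) + z2) f \<approx> rho (z1 - z2) f + rho z2 f" using z f by (intro rho_add) simp_all
  then have "rho z1 f \<approx> rho (z1 - z2) f + rho z2 f" by simp
  then have "rho z1 f - rho z2 f \<approx> rho (z1 - z2) f + rho z2 f - rho z2 f" by (rule eqK_diff) simp
  then show ?thesis by (simp add: eqK_sym)
qed

lemma rho_uminus: "valid n z \<Longrightarrow> f \<in> V \<Longrightarrow> rho (- z) f \<approx> - rho z f"
proof -
  assume z: "valid n z" and f: "f \<in> V"
  have "rho (0 - z) f \<approx> rho 0 f - rho z f" using z f by (intro rho_diff) simp_all
  also have "rho 0 f - rho z f \<approx> 0 - rho z f" by (rule eqK_diff[OF rho_zero[OF f]]) simp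
  finally show ?thesis by simp
qed

lemma rho_eq0: "z = 0 \<Longrightarrow> f \<in> V \<Longrightarrow> rho z f \<approx> 0" using rho_zero by simp

lemma rho_NM: "NM p \<Longrightarrow> f \<in> V \<Longrightarrow> rho p f \<approx> lm p f"
proof -
  assume p: "NM p" and f: "f \<in> V"
  have "lowp p = p" "upp p = 0" using p by (simp_all add: NM_def lowp_nminus upp_nminus)
  then have "rho p f - lm p f = R 0 f" by (simp add: rho_def)
  then show ?thesis using R_zero_b[OF f] by (simp add: eqK_def)
qed

lemma rho_BP: "BP q \<Longrightarrow> f \<in> V \<Longrightarrow> rho q f \<approx> R q f"
proof -
  assume q: "BP q" and f: "f \<in> V"
  have "lowp q = 0" "upp q = q" using q by (simp_all add: BP_def lowp_bplus upp_bplus)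
  then have "rho q f - R q f = lm 0 f" by (simp add: rho_def)
  then show ?thesis using lm_zero_letter[OF f] by (simp add: eqK_def)
qed

lemma rho_split: "valid n z \<Longrightarrow> f \<in> V \<Longrightarrow> rho z f \<approx> rho (lowp z) f + rho (upp z) f"
proof -
  assume z: "valid n z" and f: "f \<in> V"
  have "rho (lowp z + upp z) f \<approx> rho (lowp z) f + rho (upp z) f" using z f by (intro rho_add) simp_all
  then show ?thesis using low_up_split[of z] by simp
qed

lemma lm_add_letter': "NM x \<Longrightarrow> NM y \<Longrightarrow> f \<in> V \<Longrightarrow> lm (x + y) f \<approx> lm x f + lm y f"
  unfolding eqK_def using lm_add_letter by (simp add: diff_diff_eq)
lemma lm_comm': "NM x \<Longrightarrow> NM y \<Longrightarrow> f \<in> V \<Longrightarrow> lm x (lm y f) \<approx> lm y (lm x f) + lm (br x y) f"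
  unfolding eqK_def using lm_comm by (simp add: diff_diff_eq)

lemma CL: "valid n z \<Longrightarrow> NM y \<Longrightarrow> f \<in> V \<Longrightarrow> rho z (lm y f) \<approx> lm y (rho z f) + rho (br z y) f"
proof -
  assume z: "valid n z" and y: "NM y" and f: "f \<in> V"
  have yv: "valid n y" using y by (simp add: NM_valid)
  have "rho z (lm y f) = lm (lowp z) (lm y f) + R (upp z) (lm y f)" by (simp add: rho_def)
  also have "\<dots> = lm (lowp z) (lm y f) + (lm y (R (upp z) f) + rho (br (upp z) y) f)"
    using f by (simp add: R1)
  also have "\<dots> \<approx> (lm y (lm (lowp z) f) + lm (br (lowp z) y) f) + (lm y (R (upp z) f) + rho (br (upp z) y) f)"
    by (rule eqK_addL, rule lm_comm') (use z y f in simp_all)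
  also have "\<dots> \<approx> (lm y (lm (lowp z) f) + rho (br (lowp z) y) f) + (lm y (R (upp z) f) + rho (br (upp z) y) f)"
    by (rule eqK_addL, rule eqK_addR, rule eqK_sym, rule rho_NM) (use z y f in \<open>simp_all add: NM_br\<close>)
  also have "\<dots> = lm y (lm (lowp z) f + R (upp z) f) + (rho (br (lowp z) y) f + rho (br (upp z) y) f)"
    by (simp add: lm_add algebra_simps)
  also have "\<dots> \<approx> lm y (lm (lowp z) f + R (upp z) f) + rho (br (lowp z) y + br (upp z) y) f"
    by (rule eqK_addR, rule eqK_sym, rule rho_add) (use z yv f in simp_all)
  also have "br (lowp z) y + br (upp z) y = br z y"
    using low_up_split[of z] bracket_add_left[of n "lowp z" "upp z" y] by simp
  also have "lm (lowp z) f + R (upp z) f = rho z f" by (simp only: rho_def)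
  finally show ?thesis .
qed

end


context ca
begin

primrec lmw :: "cur list \<Rightarrow> fa \<Rightarrow> fa" where
  "lmw [] f = f"
| "lmw (x # u) f = lm x (lmw u f)"

lemma lmw_word: "lmw u (fa_word w) = fa_word (u @ w)"
  by (induction u) simp_all
lemma lmw_diff: "lmw u (f - g) = lmw u f - lmw u g"
proof (induction u)
  case Nil then show ?case by simp
next
  case (Cons x u) then show ?case by (simp only: lmw.simps lm_diff)
qed
lemma lmw_sm: "lmw u (sm c f) = sm c (lmw u f)"
proof (induction u)
  case Nil then show ?case by simp
next
  case (Cons x u) then show ?case by (simp only: lmw.simps lm_sm)
qed
lemma lmw_K: "u \<in> nwords \<Longrightarrow> f \<in> K \<Longrightarrow> lmw u f \<in> K"
  by (induction u) (simp_all add: lm_K)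

lemma RK_prefix:
  assumes "u \<in> nwords" "g \<in> K" "\<And>b. valid n b \<Longrightarrow> R b g \<in> K" "valid n b"
  shows "R b (lmw u g) \<in> K"
  using assms(1,4)
proof (induction u arbitrary: b)
  case Nil then show ?case using assms(3) by simp
next
  case (Cons x u)
  have x: "NM x" and u: "u \<in> nwords" using Cons.prems by auto
  have gK: "lmw u g \<in> K" using lmw_K[OF u assms(2)] .
  have "R b (lmw (x # u) g) = lm x (R b (lmw u g)) + (lm (lowp (br b x)) (lmw u g) + R (upp (br b x)) (lmw u g))"
    using fin_supp_K[OF gK] by (simp add: R1 rho_def)
  moreover have "lm x (R b (lmw u g)) \<in> K" by (rule lm_K[OF x Cons.IH[OF u Cons.prems(2)]])
  moreover have "lm (lowp (br b x)) (lmw u g) \<in> K"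
    using x Cons.prems(2) by (intro lm_K[OF _ gK]) (simp add: NM_valid)
  moreover have "R (upp (br b x)) (lmw u g) \<in> K"
    using x Cons.prems(2) by (intro Cons.IH[OF u]) (simp add: NM_valid)
  ultimately show ?case by (simp only:) (intro Kadd)
qed

lemma rho3: "valid n z1 \<Longrightarrow> valid n z2 \<Longrightarrow> z3 = z1 - z2 \<Longrightarrow> f \<in> V \<Longrightarrow> rho z1 f - rho z2 f - rho z3 f \<in> K"
proof -
  assume z: "valid n z1" "valid n z2" "z3 = z1 - z2" and f: "f \<in> V"
  have "rho z3 f \<approx> rho z1 f - rho z2 f" using z f by (simp add: rho_diff)
  then have "rho z1 f - rho z2 f \<approx> rho z3 f" by (rule eqK_sym)
  then show ?thesis by (simp add: eqK_def)
qed

lemma gen1_R: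
  assumes w: "w \<in> nwords" and x: "NM x" and y: "NM y" and b: "valid n b"
  shows "R b (fa_word ((x + y) # w) - fa_word (x # w) - fa_word (y # w)) \<in> K"
proof -
  let ?W = "fa_word w" let ?RW = "R b ?W"
  have W: "?W \<in> V" using w by (rule word_V)
  have RW: "?RW \<in> V" using b W by (rule R_V)
  have xv: "valid n x" "valid n y" using x y by (simp_all add: NM_valid)
  have e: "R b (fa_word ((x + y) # w) - fa_word (x # w) - fa_word (y # w))
      = (lm (x + y) ?RW + rho (br b (x + y)) ?W) - (lm x ?RW + rho (br b x) ?W) - (lm y ?RW + rho (br b y) ?W)"
    by (simp add: R_diff R1 flip: lm_word)
  have A: "lm (x + y) ?RW \<approx> lm x ?RW + lm y ?RW" using x y RW by (rule lm_add_letter')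
  have B: "rho (br b (x + y)) ?W \<approx> rho (br b x) ?W + rho (br b y) ?W"
    unfolding bracket_add_right using b xv W by (intro rho_add) simp_all
  have "(lm (x + y) ?RW + rho (br b (x + y)) ?W) - (lm x ?RW + rho (br b x) ?W) - (lm y ?RW + rho (br b y) ?W)
    \<approx> ((lm x ?RW + lm y ?RW) + (rho (br b x) ?W + rho (br b y) ?W)) - (lm x ?RW + rho (br b x) ?W) - (lm y ?RW + rho (br b y) ?W)"
    by (intro eqK_diff eqK_add A B eqK_refl)
  also have "\<dots> = 0" by (simp add: algebra_simps)
  finally show ?thesis unfolding e eqK_0 .
qed

lemma gen2_R:
  assumes w: "w \<in> nwords" and x: "NM x" and b: "valid n b"
  shows "R b (fa_word (csm c x # w) - sm c (fa_word (x # w))) \<in> K"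
proof -
  let ?W = "fa_word w" let ?RW = "R b ?W"
  have W: "?W \<in> V" using w by (rule word_V)
  have RW: "?RW \<in> V" using b W by (rule R_V)
  have xv: "valid n x" using x by (simp_all add: NM_valid)
  have e: "R b (fa_word (csm c x # w) - sm c (fa_word (x # w)))
      = (lm (csm c x) ?RW + rho (br b (csm c x)) ?W) - sm c (lm x ?RW + rho (br b x) ?W)"
    by (simp add: R_diff R1 R_sm flip: lm_word)
  have A: "lm (csm c x) ?RW \<approx> sm c (lm x ?RW)" using lm_sm_letter[OF x RW] by (simp add: eqK_def)
  have B: "rho (br b (csm c x)) ?W \<approx> sm c (rho (br b x) ?W)"
    unfolding bracket_csm_right using b xv W by (intro rho_sm) simp_all
  have "(lm (csm c x) ?RW + rho (br b (csm c x)) ?W) - sm c (lm x ?RW + rho (br b x) ?W)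
    \<approx> (sm c (lm x ?RW) + sm c (rho (br b x) ?W)) - sm c (lm x ?RW + rho (br b x) ?W)"
    by (intro eqK_diff eqK_add A B eqK_refl)
  also have "\<dots> = 0" by (simp add: fun_eq_iff algebra_simps)
  finally show ?thesis unfolding e eqK_0 .
qed

lemma jac2: "br b (br x y) = br (br b x) y - br (br b y) x"
  using jacobi[of n b x y] bracket_antisym[of n x "br b y"] by simp

lemma gen3_R:
  assumes w: "w \<in> nwords" and x: "NM x" and y: "NM y" and b: "valid n b"
  shows "R b (fa_word (x # y # w) - fa_word (y # x # w) - fa_word (br x y # w)) \<in> K"
proof -
  let ?W = "fa_word w" let ?RW = "R b ?W"
  have W: "?W \<in> V" using w by (rule word_V)
  have RW: "?RW \<in> V" using b W by (rule R_V)
  have xv: "valid n x" "valid n y" using x y by (simp_all add: NM_valid)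
  have P: "R b (lm p (lm q ?W)) \<approx> lm p (lm q ?RW) + lm p (rho (br b q) ?W) + lm q (rho (br b p) ?W) + rho (br (br b p) q) ?W"
    if p: "NM p" and q: "NM q" for p q
  proof -
    have pv: "valid n p" "valid n q" using p q by (simp_all add: NM_valid)
    have s1: "R b (lm p (lm q ?W)) = lm p (R b (lm q ?W)) + rho (br b p) (lm q ?W)"
      by (rule R1) simp
    have s2: "R b (lm q ?W) = lm q ?RW + rho (br b q) ?W" by (rule R1) simp
    have "R b (lm p (lm q ?W)) = lm p (lm q ?RW + rho (br b q) ?W) + rho (br b p) (lm q ?W)"
      by (simp only: s1 s2)
    also have "\<dots> \<approx> lm p (lm q ?RW + rho (br b q) ?W) + (lm q (rho (br b p) ?W) + rho (br (br b p) q) ?W)"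
      by (rule eqK_addR, rule CL) (use b pv q W in simp_all)
    also have "\<dots> = lm p (lm q ?RW) + lm p (rho (br b q) ?W) + lm q (rho (br b p) ?W) + rho (br (br b p) q) ?W"
      by (simp add: lm_add algebra_simps)
    finally show ?thesis .
  qed
  have e: "R b (fa_word (x # y # w) - fa_word (y # x # w) - fa_word (br x y # w))
     = R b (lm x (lm y ?W)) - R b (lm y (lm x ?W)) - (lm (br x y) ?RW + rho (br b (br x y)) ?W)"
    by (simp add: R_diff R1 flip: lm_word)
  have "R b (lm x (lm y ?W)) - R b (lm y (lm x ?W)) - (lm (br x y) ?RW + rho (br b (br x y)) ?W)
     \<approx> (lm x (lm y ?RW) + lm x (rho (br b y) ?W) + lm y (rho (br b x) ?W) + rho (br (br b x) y) ?W)
      - (lm y (lm x ?RW) + lm y (rho (br b x) ?W) + lm x (rho (br b y) ?W) + rho (br (br b y) x) ?W)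
      - (lm (br x y) ?RW + rho (br b (br x y)) ?W)"
    by (intro eqK_diff P x y eqK_refl)
  also have "\<dots> = (lm x (lm y ?RW) - lm y (lm x ?RW) - lm (br x y) ?RW)
      + (rho (br (br b x) y) ?W - rho (br (br b y) x) ?W - rho (br b (br x y)) ?W)"
    by (simp add: algebra_simps)
  also have "\<dots> \<approx> 0"
  proof -
    have "lm x (lm y ?RW) - lm y (lm x ?RW) - lm (br x y) ?RW \<in> K" using x y RW by (rule lm_comm)
    moreover have "rho (br (br b x) y) ?W - rho (br (br b y) x) ?W - rho (br b (br x y)) ?W \<in> K"
      using b xv W by (intro rho3) (simp_all add: jac2)
    ultimately show ?thesis unfolding eqK_0[symmetric] by (rule Kadd)
  qed
  finally show ?thesis unfolding e eqK_0 .
qed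

lemma RK_gen: "valid n b \<Longrightarrow> g \<in> KG \<Longrightarrow> R b g \<in> K"
proof -
  assume b: "valid n b" and g: "g \<in> KG"
  from g show ?thesis unfolding KG_def
  proof (elim UnE CollectE exE conjE)
    fix u x y w assume g: "g = fa_word (u @ (x + y) # w) - fa_word (u @ x # w) - fa_word (u @ y # w)"
      and h: "u \<in> nwords" "w \<in> nwords" "NM x" "NM y"
    have "g = lmw u (fa_word ((x + y) # w) - fa_word (x # w) - fa_word (y # w))"
      unfolding g by (simp add: lmw_diff lmw_word)
    moreover have "R b (lmw u (fa_word ((x + y) # w) - fa_word (x # w) - fa_word (y # w))) \<in> K"
      by (rule RK_prefix[OF h(1) _ _ b]) (use K_gen1[of "[]" w x y] gen1_R h in simp_all)
    ultimately show "R b g \<in> K" by simp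
  next
    fix u c x w assume g: "g = fa_word (u @ csm c x # w) - sm c (fa_word (u @ x # w))"
      and h: "u \<in> nwords" "w \<in> nwords" "NM x"
    have "g = lmw u (fa_word (csm c x # w) - sm c (fa_word (x # w)))"
      unfolding g by (simp add: lmw_diff lmw_sm lmw_word)
    moreover have "R b (lmw u (fa_word (csm c x # w) - sm c (fa_word (x # w)))) \<in> K"
      by (rule RK_prefix[OF h(1) _ _ b]) (use K_gen2[of "[]" w x c] gen2_R h in simp_all)
    ultimately show "R b g \<in> K" by simp
  next
    fix u x y w assume g: "g = fa_word (u @ x # y # w) - fa_word (u @ y # x # w) - fa_word (u @ br x y # w)"
      and h: "u \<in> nwords" "w \<in> nwords" "NM x" "NM y"
    have "g = lmw u (fa_word (x # y # w) - fa_word (y # x # w) - fa_word (br x y # w))"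
      unfolding g by (simp add: lmw_diff lmw_word)
    moreover have "R b (lmw u (fa_word (x # y # w) - fa_word (y # x # w) - fa_word (br x y # w))) \<in> K"
      by (rule RK_prefix[OF h(1) _ _ b]) (use K_gen3[of "[]" w x y] gen3_R h in simp_all)
    ultimately show "R b g \<in> K" by simp
  qed
qed

lemma RK: "valid n b \<Longrightarrow> f \<in> K \<Longrightarrow> R b f \<in> K"
proof -
  assume b: "valid n b" and f: "f \<in> K"
  have "f \<in> cspan KG" using f by (simp add: K_def)
  then show ?thesis
    by (rule span_lin[OF _ linop_R subsp_K]) (use b in \<open>auto intro: fin_supp_K KG_K RK_gen\<close>)
qed

lemma rhoK: "valid n z \<Longrightarrow> f \<in> K \<Longrightarrow> rho z f \<in> K"
  unfolding rho_def by (intro Kadd lm_K RK) simp_all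

lemma eqK_R: "valid n b \<Longrightarrow> f \<approx> g \<Longrightarrow> fin_supp f \<Longrightarrow> fin_supp g \<Longrightarrow> R b f \<approx> R b g"
  unfolding eqK_def by (simp add: RK R_diff[symmetric])

lemma eqK_rho: "valid n z \<Longrightarrow> f \<approx> g \<Longrightarrow> fin_supp f \<Longrightarrow> fin_supp g \<Longrightarrow> rho z f \<approx> rho z g"
  unfolding eqK_def by (simp add: rhoK rho_diff_vec[symmetric])

end


context ca
begin

lemma lie3: "br (br b b') x = br (br b x) b' - br (br b' x) b"
proof -
  have "br b (br b' x) = br (br b b') x + br b' (br b x)" by (rule jacobi)
  moreover have "br b (br b' x) = - br (br b' x) b" by (rule bracket_antisym)
  moreover have "br b' (br b x) = - br (br b x) b'" by (rule bracket_antisym)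
  ultimately show ?thesis by (simp add: algebra_simps)
qed

lemma CR:
  assumes z: "valid n z" and b': "BP b'" and g: "g \<in> V"
    and IH: "\<And>c c'. BP c \<Longrightarrow> BP c' \<Longrightarrow> R c (R c' g) - R c' (R c g) - R (br c c') g \<in> K"
  shows "rho z (R b' g) - R b' (rho z g) \<approx> rho (br z b') g"
proof -
  have bv: "valid n b'" using b' by (simp add: BP_valid)
  have Rg: "R b' g \<in> V" using bv g by (rule R_V)
  have Rzg: "R (upp z) g \<in> V" using z g by (intro R_V) simp_all
  have s1: "R b' (rho z g) = lm (lowp z) (R b' g) + rho (br b' (lowp z)) g + R b' (R (upp z) g)"
    using g by (simp add: rho_def R_add R1)
  have "rho z (R b' g) - R b' (rho z g)
      = (R (upp z) (R b' g) - R b' (R (upp z) g)) - rho (br b' (lowp z)) g"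
    unfolding s1 by (simp add: rho_def algebra_simps)
  also have "\<dots> \<approx> R (br (upp z) b') g - rho (br b' (lowp z)) g"
  proof (rule eqK_diff[OF _ eqK_refl])
    have "R (upp z) (R b' g) - R b' (R (upp z) g) - R (br (upp z) b') g \<in> K"
      using z b' by (intro IH) (simp_all add: BP_def)
    then show "R (upp z) (R b' g) - R b' (R (upp z) g) \<approx> R (br (upp z) b') g"
      by (simp add: eqK_def diff_diff_eq)
  qed
  also have "\<dots> \<approx> rho (br (upp z) b') g + rho (br (lowp z) b') g"
  proof (rule eqK_diff[of _ _ _ "- rho (br (lowp z) b') g", simplified])
    show "R (br (upp z) b') g \<approx> rho (br (upp z) b') g"
      by (rule eqK_sym, rule rho_BP) (use z b' g in \<open>simp_all add: BP_def bplus_bracket\<close>)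
    have "rho (- br (lowp z) b') g \<approx> - rho (br (lowp z) b') g"
      using z bv g by (intro rho_uminus) simp_all
    then show "rho (br b' (lowp z)) g \<approx> - rho (br (lowp z) b') g"
      using bracket_antisym[of n b' "lowp z"] by simp
  qed
  also have "\<dots> \<approx> rho (br (upp z) b' + br (lowp z) b') g"
    by (rule eqK_sym, rule rho_add) (use z bv g in simp_all)
  also have "br (upp z) b' + br (lowp z) b' = br z b'"
    using low_up_split[of z] bracket_add_left[of n "lowp z" "upp z" b'] by (simp add: add.commute)
  finally show ?thesis .
qed

lemma D_word:
  "w \<in> nwords \<Longrightarrow> BP b \<Longrightarrow> BP b' \<Longrightarrow> R b (R b' (fa_word w)) - R b' (R b (fa_word w)) - R (br b b') (fa_word w) \<in> K"
proof (induction w arbitrary: b b')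
  case Nil
  show ?case using K0 by (simp only: R_word Rw.simps R_zero_vec diff_self)
next
  case (Cons x w)
  let ?g = "fa_word w"
  have x: "NM x" and w: "w \<in> nwords" using Cons.prems by auto
  have g: "?g \<in> V" using w by (rule word_V)
  have b: "valid n b" "valid n b'" using Cons.prems by (simp_all add: BP_valid)
  have xv: "valid n x" using x by (simp add: NM_valid)
  have IH: "\<And>c c'. BP c \<Longrightarrow> BP c' \<Longrightarrow> R c (R c' ?g) - R c' (R c ?g) - R (br c c') ?g \<in> K"
    using Cons.IH[OF w] .
  have T: "R c (R c' (lm x ?g)) = lm x (R c (R c' ?g)) + rho (br c x) (R c' ?g) + R c (rho (br c' x) ?g)" for c c'
  proof -
    have "R c' (lm x ?g) = lm x (R c' ?g) + rho (br c' x) ?g" by (rule R1) simp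
    then have "R c (R c' (lm x ?g)) = R c (lm x (R c' ?g)) + R c (rho (br c' x) ?g)" by (simp add: R_add)
    also have "R c (lm x (R c' ?g)) = lm x (R c (R c' ?g)) + rho (br c x) (R c' ?g)" by (rule R1) simp
    finally show ?thesis .
  qed
  have T2: "R (br b b') (lm x ?g) = lm x (R (br b b') ?g) + rho (br (br b b') x) ?g" by (rule R1) simp
  have "R b (R b' (lm x ?g)) - R b' (R b (lm x ?g)) - R (br b b') (lm x ?g)
     = lm x (R b (R b' ?g) - R b' (R b ?g) - R (br b b') ?g)
       + (rho (br b x) (R b' ?g) - R b' (rho (br b x) ?g))
       - (rho (br b' x) (R b ?g) - R b (rho (br b' x) ?g))
       - rho (br (br b b') x) ?g"
    unfolding T T2 by (simp add: lm_diff lm_add algebra_simps)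
  also have "\<dots> \<approx> 0 + rho (br (br b x) b') ?g - rho (br (br b' x) b) ?g - rho (br (br b b') x) ?g"
  proof (intro eqK_diff eqK_add eqK_refl)
    show "lm x (R b (R b' ?g) - R b' (R b ?g) - R (br b b') ?g) \<approx> 0"
      unfolding eqK_0[symmetric] by (rule lm_K[OF x IH[OF Cons.prems(2,3)]])
    show "rho (br b x) (R b' ?g) - R b' (rho (br b x) ?g) \<approx> rho (br (br b x) b') ?g"
      by (rule CR[OF _ Cons.prems(3) g IH]) (use b xv in simp_all)
    show "rho (br b' x) (R b ?g) - R b (rho (br b' x) ?g) \<approx> rho (br (br b' x) b) ?g"
      by (rule CR[OF _ Cons.prems(2) g IH]) (use b xv in simp_all)
  qed
  also have "\<dots> \<approx> 0"
  proof -
    have "rho (br (br b x) b') ?g - rho (br (br b' x) b) ?g - rho (br (br b b') x) ?g \<in> K"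
      by (rule rho3[OF _ _ lie3 g]) (use b xv in simp_all)
    then show ?thesis by (simp add: eqK_def)
  qed
  finally show ?case by (simp only: eqK_def lm_word diff_zero)
qed

lemma D: "BP b \<Longrightarrow> BP b' \<Longrightarrow> f \<in> V \<Longrightarrow> R b (R b' f) - R b' (R b f) - R (br b b') f \<in> K"
proof -
  assume b: "BP b" "BP b'" and f: "f \<in> V"
  have lin: "linop (\<lambda>f. R b (R b' f) - R b' (R b f) - R (br b b') f)"
    by (intro linop_diff_op linop_comp'[OF linop_R linop_R] linop_R)
  show ?thesis using f unfolding V_def'
  proof (rule span_lin[OF _ lin subsp_K])
    fix g assume "g \<in> {fa_word w |w. w \<in> nwords}"
    then obtain w where "g = fa_word w" "w \<in> nwords" by blast
    then show "R b (R b' g) - R b' (R b g) - R (br b b') g \<in> K" using D_word[OF _ b] by simp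
  qed auto
qed

lemma rho_comm:
  assumes x: "valid n x" and y: "valid n y" and f: "f \<in> V"
  shows "rho x (rho y f) - rho y (rho x f) \<approx> rho (br x y) f"
proof -
  let ?xl = "lowp x" let ?xu = "upp x" let ?yl = "lowp y" let ?yu = "upp y"
  have v: "valid n ?xl" "valid n ?xu" "valid n ?yl" "valid n ?yu" using x y by simp_all
  have nm: "NM ?xl" "NM ?yl" "BP ?xu" "BP ?yu" using x y by simp_all
  have e: "rho p (rho q f) = lm (lowp p) (lm (lowp q) f) + lm (lowp p) (R (upp q) f)
        + R (upp p) (lm (lowp q) f) + R (upp p) (R (upp q) f)" for p q
    using f by (simp add: rho_def R_add lm_add algebra_simps)
  have r2: "R ?xu (lm ?yl f) = lm ?yl (R ?xu f) + rho (br ?xu ?yl) f" using f by (simp add: R1)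
  have r3: "R ?yu (lm ?xl f) = lm ?xl (R ?yu f) + rho (br ?yu ?xl) f" using f by (simp add: R1)
  have c1: "lm ?xl (lm ?yl f) - lm ?yl (lm ?xl f) \<approx> rho (br ?xl ?yl) f"
  proof -
    have "lm ?xl (lm ?yl f) - lm ?yl (lm ?xl f) \<approx> lm (br ?xl ?yl) f"
      using lm_comm[OF nm(1,2) f] by (simp add: eqK_def diff_diff_eq)
    also have "\<dots> \<approx> rho (br ?xl ?yl) f" by (rule eqK_sym, rule rho_NM) (use nm f in \<open>simp_all add: NM_br\<close>)
    finally show ?thesis .
  qed
  have c4: "R ?xu (R ?yu f) - R ?yu (R ?xu f) \<approx> rho (br ?xu ?yu) f"
  proof -
    have "R ?xu (R ?yu f) - R ?yu (R ?xu f) \<approx> R (br ?xu ?yu) f"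
      using D[OF nm(3,4) f] by (simp add: eqK_def diff_diff_eq)
    also have "\<dots> \<approx> rho (br ?xu ?yu) f" by (rule eqK_sym, rule rho_BP) (use nm f in \<open>simp_all add: BP_br\<close>)
    finally show ?thesis .
  qed
  have c3: "- rho (br ?yu ?xl) f \<approx> rho (br ?xl ?yu) f"
  proof -
    have "rho (- br ?yu ?xl) f \<approx> - rho (br ?yu ?xl) f" using v f by (intro rho_uminus) simp_all
    then show ?thesis using bracket_antisym[of n ?yu ?xl] by (simp add: eqK_sym)
  qed
  have "rho x (rho y f) - rho y (rho x f)
     = (lm ?xl (lm ?yl f) - lm ?yl (lm ?xl f)) + rho (br ?xu ?yl) f + (- rho (br ?yu ?xl) f)
       + (R ?xu (R ?yu f) - R ?yu (R ?xu f))"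
    unfolding e r2 r3 by (simp add: algebra_simps)
  also have "\<dots> \<approx> rho (br ?xl ?yl) f + rho (br ?xu ?yl) f + rho (br ?xl ?yu) f + rho (br ?xu ?yu) f"
    by (intro eqK_add c1 c3 c4 eqK_refl)
  also have "\<dots> \<approx> rho (br ?xl ?yl + br ?xu ?yl) f + rho (br ?xl ?yu + br ?xu ?yu) f"
  proof -
    have a: "rho (br ?xl ?yl + br ?xu ?yl) f \<approx> rho (br ?xl ?yl) f + rho (br ?xu ?yl) f"
      using v f by (intro rho_add) simp_all
    have b: "rho (br ?xl ?yu + br ?xu ?yu) f \<approx> rho (br ?xl ?yu) f + rho (br ?xu ?yu) f"
      using v f by (intro rho_add) simp_all
    have "rho (br ?xl ?yl) f + rho (br ?xu ?yl) f + rho (br ?xl ?yu) f + rho (br ?xu ?yu) f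
      = (rho (br ?xl ?yl) f + rho (br ?xu ?yl) f) + (rho (br ?xl ?yu) f + rho (br ?xu ?yu) f)"
      by (simp add: algebra_simps)
    also have "\<dots> \<approx> rho (br ?xl ?yl + br ?xu ?yl) f + rho (br ?xl ?yu + br ?xu ?yu) f"
      by (intro eqK_add eqK_sym[OF a] eqK_sym[OF b])
    finally show ?thesis .
  qed
  also have "\<dots> \<approx> rho ((br ?xl ?yl + br ?xu ?yl) + (br ?xl ?yu + br ?xu ?yu)) f"
    by (rule eqK_sym, rule rho_add) (use v f in simp_all)
  also have "(br ?xl ?yl + br ?xu ?yl) + (br ?xl ?yu + br ?xu ?yu) = br x y"
  proof -
    have "br x y = br (?xl + ?xu) (?yl + ?yu)" using low_up_split[of x] low_up_split[of y] by simp
    also have "\<dots> = (br ?xl ?yl + br ?xu ?yl) + (br ?xl ?yu + br ?xu ?yu)"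
      by (simp add: bracket_add_left bracket_add_right algebra_simps)
    finally show ?thesis by simp
  qed
  finally show ?thesis .
qed

end


lemma linop_zero_op: "linop (\<lambda>f. 0)"
  unfolding linop_def by (simp add: fun_eq_iff)

lemma cur_plus_eq: "(\<lambda>k a b. x k a b + y k a b) = x + (y::cur)" by (intro ext) simp
lemma cur_sm_eq: "(\<lambda>k a b. c * x k a b) = csm c x" by (simp add: csm_def)

lemma fin_supp_rels: "\<rho> \<in> rels n \<Longrightarrow> fin_supp \<rho>"
  unfolding rels_def
  by (auto simp: fa_gen_word fa_diff_eq fa_add_eq fa_smult_eq)

context ca
begin

definition act1 :: "cur \<Rightarrow> fa \<Rightarrow> fa" where "act1 y f = (if valid n y then rho y f else 0)"

primrec actw :: "cur list \<Rightarrow> fa \<Rightarrow> fa" where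
  "actw [] f = f"
| "actw (y # u) f = act1 y (actw u f)"

definition Act :: "fa \<Rightarrow> fa \<Rightarrow> fa" where "Act g v = lext (\<lambda>u. actw u v) g"

definition one :: fa where "one = fa_word []"

definition Phi :: "fa \<Rightarrow> fa" where "Phi g = Act g one"

lemma linop_act1: "linop (act1 y)"
  by (cases "valid n y") (simp_all add: act1_def[abs_def] linop_rho linop_zero_op)

lemma linop_actw: "linop (actw u)"
proof (induction u)
  case Nil then show ?case using linop_id by (simp add: id_def)
next
  case (Cons y u)
  have "actw (y # u) = (\<lambda>f. act1 y (actw u f))" by (intro ext) simp
  then show ?case using linop_comp'[OF linop_act1 Cons.IH] by simp
qed

lemma fin_supp_actw[simp]: "fin_supp v \<Longrightarrow> fin_supp (actw u v)" using linopD(3)[OF linop_actw] .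

lemma act1_V: "f \<in> V \<Longrightarrow> act1 y f \<in> V" by (simp add: act1_def rho_V V0)
lemma act1_K: "f \<in> K \<Longrightarrow> act1 y f \<in> K" by (simp add: act1_def rhoK K0)
lemma actw_V: "f \<in> V \<Longrightarrow> actw u f \<in> V" by (induction u) (simp_all add: act1_V)
lemma actw_K: "f \<in> K \<Longrightarrow> actw u f \<in> K" by (induction u) (simp_all add: act1_K)

lemma actw_append: "actw (u @ w) v = actw u (actw w v)" by (induction u) simp_all

lemma linop_Act_left: "fin_supp v \<Longrightarrow> linop (\<lambda>g. Act g v)"
  unfolding Act_def by (rule lext_linop) simp

lemma Act_word[simp]: "Act (fa_word u) v = actw u v" by (simp add: Act_def)

lemma linop_Act_right: "linop (Act g)"
proof -
  have "Act g = (\<lambda>v. (\<lambda>x. \<Sum>w\<in>fsupp g. g w * actw w v x))" by (intro ext) (simp add: Act_def lext_def)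
  moreover have "linop (\<lambda>v. (\<lambda>x. \<Sum>w\<in>fsupp g. g w * actw w v x))"
    unfolding linop_def
  proof (intro conjI allI impI)
    fix f h assume "fin_supp f" "fin_supp h"
    then show "(\<lambda>x. \<Sum>w\<in>fsupp g. g w * actw w (f + h) x) = (\<lambda>x. \<Sum>w\<in>fsupp g. g w * actw w f x) + (\<lambda>x. \<Sum>w\<in>fsupp g. g w * actw w h x)"
      using linopD(1)[OF linop_actw] by (simp add: fun_eq_iff distrib_left sum.distrib)
  next
    fix c f assume "fin_supp f"
    then show "(\<lambda>x. \<Sum>w\<in>fsupp g. g w * actw w (sm c f) x) = sm c (\<lambda>x. \<Sum>w\<in>fsupp g. g w * actw w f x)"
      using linopD(2)[OF linop_actw] by (simp add: fun_eq_iff sum_distrib_left mult.left_commute)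
  next
    fix f assume "fin_supp f"
    then show "fin_supp (\<lambda>x. \<Sum>w\<in>fsupp g. g w * actw w f x)"
      by (cases "finite (fsupp g)") (auto intro!: fin_supp_sum simp: zero_fun_def[symmetric])
  qed
  ultimately show ?thesis by simp
qed

lemma Act_subsp:
  assumes "fin_supp g" "subsp A" "\<And>u. actw u v \<in> A"
  shows "Act g v \<in> A"
  unfolding Act_def lext_def using subsp_sum[OF assms(2) finite_fsupp[OF assms(1)]] assms(3) by simp

lemma Act_V: "fin_supp g \<Longrightarrow> v \<in> V \<Longrightarrow> Act g v \<in> V"
  by (rule Act_subsp[OF _ subsp_V]) (simp_all add: actw_V)
lemma Act_K: "fin_supp g \<Longrightarrow> v \<in> K \<Longrightarrow> Act g v \<in> K"
  by (rule Act_subsp[OF _ subsp_K]) (simp_all add: actw_K)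

lemma Act_mul:
  assumes a: "fin_supp a" and g: "fin_supp g" and v: "fin_supp v"
  shows "Act (fa_mul a g) v = Act a (Act g v)"
proof -
  have Agv: "fin_supp (Act g v)" using linopD(3)[OF linop_Act_left[OF v] g] .
  have l1: "linop (\<lambda>a. Act (fa_mul a g) v)" unfolding linop_def
    using g linopD[OF linop_Act_left[OF v]] by (simp add: fa_mul_add_left fa_mul_sm_left)
  have l2: "linop (\<lambda>a. Act a (Act g v))" by (rule linop_Act_left[OF Agv])
  have w: "Act (fa_mul (fa_word u) g) v = Act (fa_word u) (Act g v)" for u
  proof -
    have l3: "linop (\<lambda>g. Act (fa_mul (fa_word u) g) v)" unfolding linop_def
      using linopD[OF linop_Act_left[OF v]] by (simp add: fa_mul_add_right fa_mul_sm_right)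
    have l4: "linop (\<lambda>g. Act (fa_word u) (Act g v))"
      unfolding Act_word by (rule linop_comp'[OF linop_actw linop_Act_left[OF v]])
    show ?thesis
      by (rule linop_eqI[OF l3 l4 _ g]) (simp add: mul_word_word actw_append)
  qed
  show ?thesis by (rule linop_eqI[OF l1 l2 _ a]) (rule w)
qed

lemma one_V: "one \<in> V" unfolding one_def by (rule word_V) simp

lemma fin_supp_Phi: "fin_supp g \<Longrightarrow> fin_supp (Phi g)"
  unfolding Phi_def using linopD(3)[OF linop_Act_left] one_V by simp

lemma linop_Phi: "linop Phi"
  unfolding Phi_def[abs_def] by (rule linop_Act_left) (simp add: one_V)

lemma rels_act: "\<rho> \<in> rels n \<Longrightarrow> v \<in> V \<Longrightarrow> Act \<rho> v \<in> K"
proof -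
  assume r: "\<rho> \<in> rels n" and v: "v \<in> V"
  have fv: "fin_supp v" using v by simp
  have A1: "Act (fa_word [x]) v = act1 x v" for x by simp
  have Ad: "Act (f - g) v = Act f v - Act g v" if "fin_supp f" "fin_supp g" for f g
    using linop_diff[OF linop_Act_left[OF fv] that] .
  have Aa: "Act (f + g) v = Act f v + Act g v" if "fin_supp f" "fin_supp g" for f g
    using linopD(1)[OF linop_Act_left[OF fv] that] .
  have As: "Act (sm c f) v = sm c (Act f v)" if "fin_supp f" for f c
    using linopD(2)[OF linop_Act_left[OF fv] that] .
  from r show ?thesis unfolding rels_def
  proof (elim UnE CollectE exE conjE)
    fix x assume "\<rho> = fa_gen x" "\<not> valid n x"
    then show "Act \<rho> v \<in> K" by (simp add: fa_gen_word act1_def K0)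
  next
    fix x y assume e: "\<rho> = fa_diff (fa_gen (\<lambda>k a b. x k a b + y k a b)) (fa_add (fa_gen x) (fa_gen y))"
      and xy: "valid n x" "valid n y"
    have "Act \<rho> v = rho (x + y) v - (rho x v + rho y v)"
      unfolding e fa_diff_eq fa_add_eq fa_gen_word cur_plus_eq
      by (simp add: Ad Aa act1_def xy)
    moreover have "rho (x + y) v \<approx> rho x v + rho y v" using xy v by (rule rho_add)
    ultimately show "Act \<rho> v \<in> K" by (simp add: eqK_def)
  next
    fix c x assume e: "\<rho> = fa_diff (fa_gen (\<lambda>k a b. c * x k a b)) (fa_smult c (fa_gen x))"
      and x: "valid n x"
    have "Act \<rho> v = rho (csm c x) v - sm c (rho x v)"
      unfolding e fa_diff_eq fa_smult_eq fa_gen_word cur_sm_eq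
      by (simp add: Ad As act1_def x)
    moreover have "rho (csm c x) v \<approx> sm c (rho x v)" using x v by (rule rho_sm)
    ultimately show "Act \<rho> v \<in> K" by (simp add: eqK_def)
  next
    fix x y assume e: "\<rho> = fa_diff (fa_diff (fa_mul (fa_gen x) (fa_gen y)) (fa_mul (fa_gen y) (fa_gen x))) (fa_gen (bracket n x y))"
      and xy: "valid n x" "valid n y"
    have "Act \<rho> v = rho x (rho y v) - rho y (rho x v) - rho (br x y) v"
      unfolding e fa_diff_eq fa_gen_word mul_word_word
      by (simp add: Ad act1_def xy)
    moreover have "rho x (rho y v) - rho y (rho x v) \<approx> rho (br x y) v" using xy v by (rule rho_comm)
    ultimately show "Act \<rho> v \<in> K" by (simp add: eqK_def diff_diff_eq)
  qed
qed

lemma Phi_ideal: "g \<in> ideal n \<Longrightarrow> Phi g \<in> K"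
proof -
  assume g: "g \<in> ideal n"
  have "g \<in> cspan {fa_mul (fa_mul a \<rho>) b | a \<rho> b. fin_supp a \<and> fin_supp b \<and> \<rho> \<in> rels n}"
    using g by (simp add: ideal_def)
  then show ?thesis
  proof (rule span_lin[OF _ linop_Phi subsp_K])
    fix h assume "h \<in> {fa_mul (fa_mul a \<rho>) b | a \<rho> b. fin_supp a \<and> fin_supp b \<and> \<rho> \<in> rels n}"
    then obtain a \<rho> b where h: "h = fa_mul (fa_mul a \<rho>) b" "fin_supp a" "fin_supp b" "\<rho> \<in> rels n" by blast
    have fr: "fin_supp \<rho>" using h(4) by (rule fin_supp_rels)
    show "fin_supp h" using h fr by simp
    have bV: "Act b one \<in> V" using h(3) one_V by (rule Act_V)
    have "Act \<rho> (Act b one) \<in> K" using h(4) bV by (rule rels_act)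
    moreover have "Phi h = Act a (Act \<rho> (Act b one))"
      unfolding Phi_def h(1) using h fr one_V bV
      by (simp add: Act_mul)
    ultimately show "Phi h \<in> K" using h(2) by (simp add: Act_K)
  qed
qed

lemma Phi_left: "fin_supp a \<Longrightarrow> BP y \<Longrightarrow> Phi (fa_mul a (fa_gen y)) \<in> K"
proof -
  assume a: "fin_supp a" and y: "BP y"
  have yv: "valid n y" using y by (simp add: BP_valid)
  have "act1 y one = lm (lowp y) one + R (upp y) one" by (simp add: act1_def yv rho_def)
  also have "\<dots> = fa_word [0]" using y by (simp add: BP_def lowp_bplus one_def R_word)
  finally have "act1 y one \<in> K" using K_zero_letter[of "[]" "[]"] by simp
  then have "Act a (act1 y one) \<in> K" using a by (simp add: Act_K)
  moreover have "Phi (fa_mul a (fa_gen y)) = Act a (act1 y one)"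
    unfolding Phi_def using a by (simp add: Act_mul fa_gen_word one_V)
  ultimately show ?thesis by simp
qed

definition Jgen :: "fa set" where
  "Jgen = cspan {fa_mul a (fa_gen y) | a y. fin_supp a \<and> valid n y \<and> in_bplus y}"

lemma Jleft_eq: "Jleft n = {f + g | f g. f \<in> Jgen \<and> g \<in> ideal n}"
  by (simp add: Jleft_def Jgen_def fa_add_eq)

lemma subsp_ideal: "subsp (ideal n)" unfolding ideal_def by (rule subsp_cspan)
lemma subsp_Jgen: "subsp Jgen" unfolding Jgen_def by (rule subsp_cspan)

lemma subsp_Jleft: "subsp (Jleft n)"
  unfolding Jleft_eq subsp_def
proof (intro conjI ballI allI)
  show "(0::fa) \<in> {f + g |f g. f \<in> Jgen \<and> g \<in> ideal n}"
  proof -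
    have "(0::fa) = 0 + 0" "(0::fa) \<in> Jgen" "(0::fa) \<in> ideal n"
      using subspD(1)[OF subsp_Jgen] subspD(1)[OF subsp_ideal] by simp_all
    then show ?thesis by blast
  qed
next
  fix p q assume "p \<in> {f + g |f g. f \<in> Jgen \<and> g \<in> ideal n}" "q \<in> {f + g |f g. f \<in> Jgen \<and> g \<in> ideal n}"
  then obtain f1 g1 f2 g2 where "p = f1 + g1" "q = f2 + g2" "f1 \<in> Jgen" "g1 \<in> ideal n" "f2 \<in> Jgen" "g2 \<in> ideal n"
    by blast
  moreover have "f1 + g1 + (f2 + g2) = (f1 + f2) + (g1 + g2)" by (simp add: algebra_simps)
  ultimately show "p + q \<in> {f + g |f g. f \<in> Jgen \<and> g \<in> ideal n}"
    using subspD(2)[OF subsp_Jgen] subspD(2)[OF subsp_ideal] by blast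
next
  fix c p assume "p \<in> {f + g |f g. f \<in> Jgen \<and> g \<in> ideal n}"
  then obtain f1 g1 where "p = f1 + g1" "f1 \<in> Jgen" "g1 \<in> ideal n" by blast
  moreover have "sm c (f1 + g1) = sm c f1 + sm c g1" by (simp add: fun_eq_iff algebra_simps)
  ultimately show "sm c p \<in> {f + g |f g. f \<in> Jgen \<and> g \<in> ideal n}"
    using subspD(3)[OF subsp_Jgen] subspD(3)[OF subsp_ideal] by blast
qed

lemma Phi_Jgen: "f \<in> Jgen \<Longrightarrow> Phi f \<in> K"
  unfolding Jgen_def
  by (rule span_lin[OF _ linop_Phi subsp_K]) (auto simp: fa_gen_word BP_def intro: Phi_left[unfolded fa_gen_word])

lemma fin_supp_ideal: "g \<in> ideal n \<Longrightarrow> fin_supp g"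
  unfolding ideal_def by (rule fin_supp_cspan) (auto simp: fin_supp_rels)
lemma fin_supp_Jgen: "g \<in> Jgen \<Longrightarrow> fin_supp g"
  unfolding Jgen_def by (rule fin_supp_cspan) (auto simp: fa_gen_word)

lemma Phi_Jleft: "g \<in> Jleft n \<Longrightarrow> Phi g \<in> K"
proof -
  assume "g \<in> Jleft n"
  then obtain f h where g: "g = f + h" "f \<in> Jgen" "h \<in> ideal n" unfolding Jleft_eq by blast
  have "Phi g = Phi f + Phi h" unfolding g(1)
    by (rule linopD(1)[OF linop_Phi]) (simp_all add: fin_supp_Jgen fin_supp_ideal g)
  then show ?thesis using Phi_Jgen[OF g(2)] Phi_ideal[OF g(3)] by (simp add: Kadd)
qed

lemma actw_nwords: "w \<in> nwords \<Longrightarrow> actw w one \<approx> fa_word w"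
proof (induction w)
  case Nil then show ?case by (simp add: one_def)
next
  case (Cons x w)
  have x: "NM x" "valid n x" and w: "w \<in> nwords" using Cons.prems by (auto simp: NM_valid)
  have aV: "actw w one \<in> V" using one_V by (rule actw_V)
  have "actw (x # w) one = rho x (actw w one)" by (simp add: act1_def x)
  also have "\<dots> \<approx> rho x (fa_word w)" by (rule eqK_rho[OF x(2) Cons.IH[OF w]]) (simp_all add: aV)
  also have "\<dots> \<approx> lm x (fa_word w)" by (rule rho_NM[OF x(1) word_V[OF w]])
  finally show ?case by simp
qed

lemma Phi_V: "v \<in> V \<Longrightarrow> Phi v \<approx> v"
proof -
  assume v: "v \<in> V"
  have lin: "linop (\<lambda>v. Phi v - v)" by (rule linop_diff_op[OF linop_Phi linop_id[unfolded id_def]])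
  have "Phi v - v \<in> K" using v unfolding V_def'
  proof (rule span_lin[OF _ lin subsp_K])
    fix g assume "g \<in> {fa_word w |w. w \<in> nwords}"
    then obtain w where "g = fa_word w" "w \<in> nwords" by blast
    then show "Phi g - g \<in> K" using actw_nwords[of w] by (simp add: Phi_def eqK_def)
  qed auto
  then show ?thesis by (simp add: eqK_def)
qed

theorem pr_unique: "pr_rel n u v1 \<Longrightarrow> pr_rel n u v2 \<Longrightarrow> v1 - v2 \<in> K"
proof -
  assume p1: "pr_rel n u v1" and p2: "pr_rel n u v2"
  have v: "v1 \<in> V" "v2 \<in> V" "u - v1 \<in> Jleft n" "u - v2 \<in> Jleft n"
    using p1 p2 by (simp_all add: pr_rel_def V_def fa_diff_eq)
  have "(u - v2) - (u - v1) \<in> Jleft n" by (rule subsp_diff[OF subsp_Jleft v(4) v(3)])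
  then have J: "v1 - v2 \<in> Jleft n" by simp
  have "Phi (v1 - v2) \<in> K" using J by (rule Phi_Jleft)
  moreover have "Phi (v1 - v2) \<approx> v1 - v2" using v by (intro Phi_V Vdiff)
  ultimately show ?thesis unfolding eqK_def using Kdiff by fastforce
qed

end


unbundle fps_syntax

context ca
begin

lemma ideal_gen: "fin_supp a \<Longrightarrow> fin_supp b \<Longrightarrow> \<rho> \<in> rels n \<Longrightarrow> fa_mul (fa_mul a \<rho>) b \<in> ideal n"
  unfolding ideal_def by (rule cspan_base) blast

lemma rel_word: "\<rho> \<in> rels n \<Longrightarrow> fa_mul (fa_mul (fa_word u) \<rho>) (fa_word w) \<in> ideal n"
  by (rule ideal_gen) simp_all

lemma rel1: "valid n x \<Longrightarrow> valid n y \<Longrightarrow> fa_word [x + y] - (fa_word [x] + fa_word [y]) \<in> rels n"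
proof -
  assume "valid n x" "valid n y"
  then have "fa_diff (fa_gen (\<lambda>k a b. x k a b + y k a b)) (fa_add (fa_gen x) (fa_gen y)) \<in> rels n"
    unfolding rels_def by blast
  then show ?thesis by (simp add: fa_diff_eq fa_add_eq fa_gen_word cur_plus_eq)
qed

lemma rel2: "valid n x \<Longrightarrow> fa_word [csm c x] - sm c (fa_word [x]) \<in> rels n"
proof -
  assume "valid n x"
  then have "fa_diff (fa_gen (\<lambda>k a b. c * x k a b)) (fa_smult c (fa_gen x)) \<in> rels n"
    unfolding rels_def by blast
  then show ?thesis by (simp add: fa_diff_eq fa_smult_eq fa_gen_word cur_sm_eq)
qed

lemma rel3: "valid n x \<Longrightarrow> valid n y \<Longrightarrow> fa_word [x, y] - fa_word [y, x] - fa_word [br x y] \<in> rels n"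
proof -
  assume "valid n x" "valid n y"
  then have "fa_diff (fa_diff (fa_mul (fa_gen x) (fa_gen y)) (fa_mul (fa_gen y) (fa_gen x))) (fa_gen (bracket n x y)) \<in> rels n"
    unfolding rels_def by blast
  then show ?thesis by (simp add: fa_diff_eq fa_gen_word mul_word_word)
qed

lemma mul3_word: "fa_mul (fa_mul (fa_word u) (fa_word m)) (fa_word w) = fa_word (u @ m @ w)"
  by (simp add: mul_word_word)

lemma ideal1: "valid n x \<Longrightarrow> valid n y \<Longrightarrow> fa_word (u @ (x + y) # w) - fa_word (u @ x # w) - fa_word (u @ y # w) \<in> ideal n"
  using rel_word[OF rel1, of x y u w]
  by (simp add: fa_mul_diff_left fa_mul_diff_right fa_mul_add_left fa_mul_add_right mul_word_word diff_diff_eq)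

lemma ideal2: "valid n x \<Longrightarrow> fa_word (u @ csm c x # w) - sm c (fa_word (u @ x # w)) \<in> ideal n"
  using rel_word[OF rel2[of x c], of u w]
  by (simp add: fa_mul_diff_left fa_mul_diff_right fa_mul_sm_left fa_mul_sm_right mul_word_word)

lemma ideal3: "valid n x \<Longrightarrow> valid n y \<Longrightarrow> fa_word (u @ x # y # w) - fa_word (u @ y # x # w) - fa_word (u @ br x y # w) \<in> ideal n"
  using rel_word[OF rel3, of x y u w]
  by (simp add: fa_mul_diff_left fa_mul_diff_right mul_word_word)

lemma K_ideal: "f \<in> K \<Longrightarrow> f \<in> ideal n"
proof -
  assume f: "f \<in> K"
  have "KG \<subseteq> ideal n"
  proof
    fix g assume "g \<in> KG"
    then show "g \<in> ideal n" unfolding KG_def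
      by (elim UnE CollectE exE conjE) (simp_all add: ideal1 ideal2 ideal3 NM_valid)
  qed
  then have "cspan KG \<subseteq> ideal n" by (rule cspan_least[OF subsp_ideal])
  then show ?thesis using f by (auto simp: K_def)
qed

lemma lm_ideal: "g \<in> ideal n \<Longrightarrow> lm x g \<in> ideal n"
proof -
  assume g: "g \<in> ideal n"
  have "g \<in> cspan {fa_mul (fa_mul a \<rho>) b | a \<rho> b. fin_supp a \<and> fin_supp b \<and> \<rho> \<in> rels n}"
    using g by (simp add: ideal_def)
  then show ?thesis
  proof (rule span_lin[OF _ linop_lm subsp_ideal])
    fix h assume "h \<in> {fa_mul (fa_mul a \<rho>) b | a \<rho> b. fin_supp a \<and> fin_supp b \<and> \<rho> \<in> rels n}"
    then obtain a \<rho> b where h: "h = fa_mul (fa_mul a \<rho>) b" "fin_supp a" "fin_supp b" "\<rho> \<in> rels n" by blast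
    have fr: "fin_supp \<rho>" using h(4) by (rule fin_supp_rels)
    show "fin_supp h" using h fr by simp
    have "lm x h = fa_mul (fa_mul (fa_mul (fa_word [x]) a) \<rho>) b"
      unfolding lm_def h(1) using h fr by (simp add: fa_mul_assoc)
    then show "lm x h \<in> ideal n" using h by (simp add: ideal_gen)
  qed
qed

lemma lm_Jgen: "g \<in> Jgen \<Longrightarrow> lm x g \<in> Jgen"
proof -
  assume g: "g \<in> Jgen"
  have "g \<in> cspan {fa_mul a (fa_gen y) | a y. fin_supp a \<and> valid n y \<and> in_bplus y}"
    using g by (simp add: Jgen_def)
  then show ?thesis
  proof (rule span_lin[OF _ linop_lm subsp_Jgen])
    fix h assume "h \<in> {fa_mul a (fa_gen y) | a y. fin_supp a \<and> valid n y \<and> in_bplus y}"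
    then obtain a y where h: "h = fa_mul a (fa_gen y)" "fin_supp a" "valid n y" "in_bplus y" by blast
    show "fin_supp h" using h by (simp add: fa_gen_word)
    have "lm x h = fa_mul (fa_mul (fa_word [x]) a) (fa_gen y)"
      unfolding lm_def h(1) using h by (simp add: fa_mul_assoc fa_gen_word)
    moreover have "fin_supp (fa_mul (fa_word [x]) a)" using h by simp
    ultimately show "lm x h \<in> Jgen" unfolding Jgen_def using h by (intro cspan_base) blast
  qed
qed

lemma lm_Jleft: "g \<in> Jleft n \<Longrightarrow> lm x g \<in> Jleft n"
proof -
  assume "g \<in> Jleft n"
  then obtain f h where g: "g = f + h" "f \<in> Jgen" "h \<in> ideal n" unfolding Jleft_eq by blast
  have "lm x g = lm x f + lm x h" unfolding g(1) by (rule lm_add)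
  moreover have "lm x f \<in> Jgen" "lm x h \<in> ideal n" using g lm_Jgen lm_ideal by auto
  ultimately show ?thesis unfolding Jleft_eq by blast
qed

lemma ideal_Jleft: "g \<in> ideal n \<Longrightarrow> g \<in> Jleft n"
proof -
  assume "g \<in> ideal n"
  moreover have "(0::fa) \<in> Jgen" by (rule subspD(1)[OF subsp_Jgen])
  moreover have "g = 0 + g" by simp
  ultimately show ?thesis unfolding Jleft_eq by blast
qed

lemma Jgen_Jleft: "g \<in> Jgen \<Longrightarrow> g \<in> Jleft n"
proof -
  assume "g \<in> Jgen"
  moreover have "(0::fa) \<in> ideal n" by (rule subspD(1)[OF subsp_ideal])
  moreover have "g = g + 0" by simp
  ultimately show ?thesis unfolding Jleft_eq by blast
qed

lemma J2: "w \<in> nwords \<Longrightarrow> BP b \<Longrightarrow> fa_word (b # w) - Rw w b \<in> Jleft n"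
proof (induction w arbitrary: b)
  case Nil
  have "fin_supp (fa_word [])" "valid n b" "in_bplus b" using Nil by (simp_all add: BP_def)
  then have "fa_mul (fa_word []) (fa_gen b) \<in> Jgen" unfolding Jgen_def
    by (intro cspan_base) blast
  then show ?case by (simp add: fa_gen_word mul_word_word Jgen_Jleft)
next
  case (Cons x w)
  have x: "NM x" "valid n x" and w: "w \<in> nwords" and b: "valid n b" using Cons.prems by (auto simp: NM_valid BP_valid)
  let ?z = "br b x"
  have E1: "fa_word (b # x # w) - fa_word (x # b # w) - fa_word (?z # w) \<in> Jleft n"
    using ideal3[OF b x(2), of "[]" w] by (simp add: ideal_Jleft)
  have E2: "lm x (fa_word (b # w) - Rw w b) \<in> Jleft n"
    by (rule lm_Jleft[OF Cons.IH[OF w Cons.prems(2)]])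
  have E3: "fa_word (?z # w) - fa_word (lowp ?z # w) - fa_word (upp ?z # w) \<in> Jleft n"
  proof -
    have "fa_word ([] @ (lowp ?z + upp ?z) # w) - fa_word ([] @ lowp ?z # w) - fa_word ([] @ upp ?z # w) \<in> ideal n"
      using b x by (intro ideal1) simp_all
    then show ?thesis using low_up_split[of ?z] by (simp add: ideal_Jleft)
  qed
  have E4: "fa_word (upp ?z # w) - Rw w (upp ?z) \<in> Jleft n"
    by (rule Cons.IH[OF w]) (use b x in simp)
  have eq: "fa_word (b # x # w) - Rw (x # w) b
     = (fa_word (b # x # w) - fa_word (x # b # w) - fa_word (?z # w)) + lm x (fa_word (b # w) - Rw w b)
       + (fa_word (?z # w) - fa_word (lowp ?z # w) - fa_word (upp ?z # w)) + (fa_word (upp ?z # w) - Rw w (upp ?z))"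
    by (simp add: lm_diff algebra_simps)
  show ?case unfolding eq by (intro subspD(2)[OF subsp_Jleft] E1 E2 E3 E4)
qed

lemma J3: "BP b \<Longrightarrow> f \<in> V \<Longrightarrow> lm b f - R b f \<in> Jleft n"
proof -
  assume b: "BP b" and f: "f \<in> V"
  have lin: "linop (\<lambda>f. lm b f - R b f)" by (rule linop_diff_op[OF linop_lm linop_R])
  show ?thesis using f unfolding V_def'
  proof (rule span_lin[OF _ lin subsp_Jleft])
    fix g assume "g \<in> {fa_word w |w. w \<in> nwords}"
    then obtain w where "g = fa_word w" "w \<in> nwords" by blast
    then show "lm b g - R b g \<in> Jleft n" using J2[OF _ b] by (simp add: R_word)
  qed auto
qed

primrec RCb :: "cur list \<Rightarrow> fa \<Rightarrow> fa" where
  "RCb [] f = f"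
| "RCb (b # bs) f = R b (RCb bs f)"

lemma RCb_V: "(\<And>b. b \<in> set bs \<Longrightarrow> BP b) \<Longrightarrow> f \<in> V \<Longrightarrow> RCb bs f \<in> V"
  by (induction bs) (simp_all add: R_V BP_valid)

lemma existence:
  assumes "\<And>b. b \<in> set bs \<Longrightarrow> BP b" "ws \<in> nwords"
  shows "fa_word (bs @ ws) - RCb bs (fa_word ws) \<in> Jleft n"
  using assms(1)
proof (induction bs)
  case Nil then show ?case using subspD(1)[OF subsp_Jleft] by (simp only: append_Nil RCb.simps diff_self)
next
  case (Cons b bs)
  let ?f = "RCb bs (fa_word ws)"
  have fV: "?f \<in> V" using Cons.prems by (intro RCb_V word_V assms(2)) auto
  have "fa_word ((b # bs) @ ws) - RCb (b # bs) (fa_word ws) = lm b (fa_word (bs @ ws) - ?f) + (lm b ?f - R b ?f)"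
    by (simp add: lm_diff)
  moreover have "lm b (fa_word (bs @ ws) - ?f) \<in> Jleft n"
    by (rule lm_Jleft, rule Cons.IH) (use Cons.prems in simp)
  moreover have "lm b ?f - R b ?f \<in> Jleft n" using Cons.prems fV by (intro J3) simp_all
  ultimately show ?case by (simp only:) (intro subspD(2)[OF subsp_Jleft])
qed

end

section \<open>Elementary currents\<close>

definition Ecur :: "nat \<Rightarrow> nat \<Rightarrow> nat \<Rightarrow> cur" where
  "Ecur a0 b0 k = (\<lambda>k' a b. if k' = k \<and> a = a0 \<and> b = b0 then 1 else 0)"

lemma Fm_Ecur: "Fm (Ecur a0 b0 k) a b = (if a = a0 \<and> b = b0 then fps_X ^ k else 0)"
  by (rule fps_ext) (simp add: Ecur_def)

lemma mprod_Ecur: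
  assumes "b0 \<in> {1..n}"
  shows "mprod n (Fm (Ecur a0 b0 k)) (Fm (Ecur c0 d0 j)) = Fm (if b0 = c0 then Ecur a0 d0 (k + j) else 0)"
proof (intro ext)
  fix a b
  have "mprod n (Fm (Ecur a0 b0 k)) (Fm (Ecur c0 d0 j)) a b
      = (\<Sum>c\<in>{1..n}. if c = b0 then (if a = a0 \<and> b0 = c0 \<and> b = d0 then fps_X ^ k * fps_X ^ j else 0) else 0)"
    unfolding mprod_def Fm_Ecur by (rule sum.cong) auto
  also have "\<dots> = (if a = a0 \<and> b0 = c0 \<and> b = d0 then fps_X ^ (k + j) else 0)"
    using assms by (simp add: power_add)
  also have "\<dots> = Fm (if b0 = c0 then Ecur a0 d0 (k + j) else 0) a b"
    by (auto simp: Fm_Ecur Fm_zero)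
  finally show "mprod n (Fm (Ecur a0 b0 k)) (Fm (Ecur c0 d0 j)) a b = Fm (if b0 = c0 then Ecur a0 d0 (k + j) else 0) a b" .
qed

lemma bracket_Ecur:
  assumes "b0 \<in> {1..n}" "d0 \<in> {1..n}"
  shows "bracket n (Ecur a0 b0 k) (Ecur c0 d0 j)
     = (if b0 = c0 then Ecur a0 d0 (k + j) else 0) - (if d0 = a0 then Ecur c0 b0 (k + j) else 0)"
  by (rule Fm_inj) (simp add: Fm_bracket mprod_Ecur[OF assms(1)] mprod_Ecur[OF assms(2)] Fm_diff add.commute)

lemma valid_Ecur:
  assumes "a0 \<in> {1..n}" "b0 \<in> {1..n}" "a0 \<noteq> b0"
  shows "valid n (Ecur a0 b0 k)"
proof (rule validI[of k])
  fix k' a b assume "k < k'" then show "Ecur a0 b0 k k' a b = 0" by (simp add: Ecur_def)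
next
  fix k' a b assume "a \<notin> {1..n} \<or> b \<notin> {1..n}" then show "Ecur a0 b0 k k' a b = 0"
    using assms by (auto simp: Ecur_def)
next
  fix k' show "(\<Sum>a\<in>{1..n}. Ecur a0 b0 k k' a a) = 0" using assms by (intro sum.neutral) (auto simp: Ecur_def)
qed

lemma valid_Hcur:
  assumes "a0 \<in> {1..n}" "b0 \<in> {1..n}"
  shows "valid n (Ecur a0 a0 k - Ecur b0 b0 k)"
proof (rule validI[of k])
  fix k' a b assume "k < k'" then show "(Ecur a0 a0 k - Ecur b0 b0 k) k' a b = 0" by (simp add: Ecur_def)
next
  fix k' a b assume "a \<notin> {1..n} \<or> b \<notin> {1..n}" then show "(Ecur a0 a0 k - Ecur b0 b0 k) k' a b = 0"
    using assms by (auto simp: Ecur_def)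
next
  fix k' show "(\<Sum>a\<in>{1..n}. (Ecur a0 a0 k - Ecur b0 b0 k) k' a a) = 0"
    using assms by (cases "k' = k") (simp_all add: Ecur_def sum_subtractf)
qed


lemma subsp_eqK_closure: "subsp A \<Longrightarrow> subsp {f. \<exists>c\<in>A. ca.eqK n f c}"
proof -
  assume A: "subsp A"
  show ?thesis unfolding subsp_def
  proof (intro conjI ballI allI)
    show "(0::fa) \<in> {f. \<exists>c\<in>A. ca.eqK n f c}" using subspD(1)[OF A] ca.eqK_refl by blast
  next
    fix f g assume "f \<in> {f. \<exists>c\<in>A. ca.eqK n f c}" "g \<in> {f. \<exists>c\<in>A. ca.eqK n f c}"
    then obtain c d where "c \<in> A" "d \<in> A" "ca.eqK n f c" "ca.eqK n g d" by blast
    then have "c + d \<in> A" "ca.eqK n (f + g) (c + d)" using subspD(2)[OF A] ca.eqK_add by blast+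
    then show "f + g \<in> {f. \<exists>c\<in>A. ca.eqK n f c}" by blast
  next
    fix e f assume "f \<in> {f. \<exists>c\<in>A. ca.eqK n f c}"
    then obtain c where "c \<in> A" "ca.eqK n f c" by blast
    then have "sm e c \<in> A" "ca.eqK n (sm e f) (sm e c)" using subspD(3)[OF A] ca.eqK_sm by blast+
    then show "sm e f \<in> {f. \<exists>c\<in>A. ca.eqK n f c}" by blast
  qed
qed

locale cb = ca +
  fixes i r :: nat
  assumes n_eq: "n = Suc r" and i1: "1 \<le> i" and ir: "i \<le> r"
begin

abbreviation xp where "xp \<equiv> xplus i r"
abbreviation xm where "xm \<equiv> xminus i r"

definition Hc :: "nat \<Rightarrow> cur" where "Hc p = Ecur i i p - Ecur (Suc r) (Suc r) p"

lemma xp_E: "xp k = Ecur i (Suc r) k" by (simp add: xplus_def Ecur_def)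
lemma xm_E: "xm k = Ecur (Suc r) i k" by (simp add: xminus_def Ecur_def)

lemma idx: "i \<in> {1..n}" "Suc r \<in> {1..n}" "i \<noteq> Suc r" using n_eq i1 ir by auto

lemma valid_xp: "valid n (xp k)" unfolding xp_E using idx by (intro valid_Ecur) auto
lemma valid_xm: "valid n (xm k)" unfolding xm_E using idx by (intro valid_Ecur) auto
lemma valid_Hc: "valid n (Hc p)" unfolding Hc_def using idx by (intro valid_Hcur) auto

lemma BP_xp: "BP (xp k)"
  using valid_xp ir by (simp add: BP_def in_bplus_def xplus_def)
lemma NM_xm: "NM (xm k)"
  using valid_xm ir by (simp add: NM_def in_nminus_def xminus_def)
lemma BP_Hc: "BP (Hc p)"
  using valid_Hc by (simp add: BP_def in_bplus_def Hc_def Ecur_def)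

lemma br_xp_xm: "br (xp k) (xm j) = Hc (k + j)"
  unfolding xp_E xm_E Hc_def using idx by (simp add: bracket_Ecur)

lemma br_Hc_xm: "br (Hc p) (xm j) = csm (-2) (xm (p + j))"
proof -
  have "br (Hc p) (xm j) = br (Ecur i i p) (Ecur (Suc r) i j) - br (Ecur (Suc r) (Suc r) p) (Ecur (Suc r) i j)"
    unfolding Hc_def xm_E by (rule bracket_diff_left)
  also have "\<dots> = - Ecur (Suc r) i (p + j) - Ecur (Suc r) i (p + j)"
    using idx by (simp add: bracket_Ecur)
  also have "\<dots> = csm (-2) (xm (p + j))" unfolding xm_E by (intro ext) (simp add: csm_def)
  finally show ?thesis .
qed

lemma br_xm_xm: "br (xm a) (xm b) = 0"
  unfolding xm_E using idx by (simp add: bracket_Ecur)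

lemma map_xm_nwords: "map xm m \<in> nwords" by (simp add: nwords_def NM_xm)

definition Sp :: "nat \<Rightarrow> nat \<Rightarrow> fa set" where
  "Sp q d = cspan {fa_word (map xm m) | m. length m = q \<and> sum_list m = d}"

definition SK :: "nat \<Rightarrow> nat \<Rightarrow> fa set" where
  "SK q d = {f. \<exists>c\<in>Sp q d. f \<approx> c}"

lemma subsp_SK: "subsp (SK q d)"
  unfolding SK_def Sp_def by (rule subsp_eqK_closure[OF subsp_cspan])

lemma Sp_V: "c \<in> Sp q d \<Longrightarrow> c \<in> V"
  unfolding Sp_def V_def' by (rule subsetD[OF cspan_mono]) (auto simp: map_xm_nwords)

lemma word_SK: "length m = q \<Longrightarrow> sum_list m = d \<Longrightarrow> fa_word (map xm m) \<in> SK q d"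
proof -
  assume a: "length m = q" "sum_list m = d"
  have "fa_word (map xm m) \<in> Sp q d" unfolding Sp_def by (rule cspan_base) (use a in blast)
  then show ?thesis unfolding SK_def by (intro CollectI bexI[of _ "fa_word (map xm m)"]) simp_all
qed

lemma K_SK: "f \<in> K \<Longrightarrow> f \<in> SK q d"
proof -
  assume f: "f \<in> K"
  have "(0::fa) \<in> Sp q d" unfolding Sp_def by (rule cspan_zero)
  moreover have "f \<approx> 0" using f by (simp add: eqK_def)
  ultimately show ?thesis unfolding SK_def by blast
qed

lemma SK_cong: "f \<in> SK q d \<Longrightarrow> q = q' \<Longrightarrow> d = d' \<Longrightarrow> f \<in> SK q' d'" by simp

lemma SK_eqK: "f \<approx> g \<Longrightarrow> g \<in> SK q d \<Longrightarrow> f \<in> SK q d"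
  unfolding SK_def using eqK_trans by blast

lemma lm_SK: "f \<in> SK q d \<Longrightarrow> lm (xm j) f \<in> SK (Suc q) (d + j)"
proof -
  assume "f \<in> SK q d"
  then obtain c where c: "c \<in> Sp q d" "f \<approx> c" unfolding SK_def by blast
  have "lm (xm j) c \<in> SK (Suc q) (d + j)" using c(1) unfolding Sp_def
  proof (rule span_lin[OF _ linop_lm subsp_SK])
    fix g assume "g \<in> {fa_word (map xm m) | m. length m = q \<and> sum_list m = d}"
    then obtain m where "g = fa_word (map xm m)" "length m = q" "sum_list m = d" by blast
    then show "lm (xm j) g \<in> SK (Suc q) (d + j)"
      using word_SK[of "j # m" "Suc q" "d + j"] by simp
  qed auto
  moreover have "lm (xm j) f \<approx> lm (xm j) c" using NM_xm c(2) by (rule eqK_lm)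
  ultimately show ?thesis by (rule SK_eqK[rotated])
qed

lemma H_act: "Rw (map xm m) (Hc p) \<in> SK (length m) (sum_list m + p)"
proof (induction m)
  case Nil
  have "Rw (map xm []) (Hc p) = 0" by simp
  then show ?case by (simp only:) (rule subspD(1)[OF subsp_SK])
next
  case (Cons j m)
  let ?W = "map xm m"
  have b: "br (Hc p) (xm j) = csm (-2) (xm (p + j))" by (rule br_Hc_xm)
  have nm: "NM (csm (-2) (xm (p + j)))" using NM_xm by (rule NM_csm)
  then have lo: "lowp (csm (-2) (xm (p + j))) = csm (-2) (xm (p + j))" "upp (csm (-2) (xm (p + j))) = 0"
    by (simp_all add: NM_def lowp_nminus upp_nminus)
  have e: "Rw (map xm (j # m)) (Hc p) = lm (xm j) (Rw ?W (Hc p)) + fa_word (csm (-2) (xm (p + j)) # ?W) + Rw ?W 0"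
    by (simp add: b lo)
  have T1: "lm (xm j) (Rw ?W (Hc p)) \<in> SK (length (j # m)) (sum_list (j # m) + p)"
    by (rule SK_cong[OF lm_SK[OF Cons.IH]]) simp_all
  have T2: "fa_word (csm (-2) (xm (p + j)) # ?W) \<in> SK (length (j # m)) (sum_list (j # m) + p)"
  proof -
    have "fa_word ([] @ csm (-2) (xm (p + j)) # ?W) - sm (-2) (fa_word ([] @ xm (p + j) # ?W)) \<in> K"
      using NM_xm map_xm_nwords by (intro K_gen2) simp_all
    then have "fa_word (csm (-2) (xm (p + j)) # ?W) \<approx> sm (-2) (fa_word (map xm ((p + j) # m)))"
      by (simp add: eqK_def)
    moreover have "sm (-2) (fa_word (map xm ((p + j) # m))) \<in> SK (length (j # m)) (sum_list (j # m) + p)"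
      by (rule subspD(3)[OF subsp_SK], rule word_SK) simp_all
    ultimately show ?thesis by (rule SK_eqK)
  qed
  have T3: "Rw ?W 0 \<in> SK (length (j # m)) (sum_list (j # m) + p)"
    using R_zero_b[OF word_V[OF map_xm_nwords]] by (simp add: R_word K_SK)
  show ?case unfolding e by (intro subspD(2)[OF subsp_SK] T1 T2 T3)
qed

lemma xp_act: "m \<noteq> [] \<Longrightarrow> Rw (map xm m) (xp k) \<in> SK (length m - 1) (sum_list m + k)"
proof (induction m)
  case Nil then show ?case by simp
next
  case (Cons j m)
  let ?W = "map xm m"
  have b: "br (xp k) (xm j) = Hc (k + j)" by (rule br_xp_xm)
  have lo: "lowp (Hc (k + j)) = 0" "upp (Hc (k + j)) = Hc (k + j)"
    using BP_Hc by (simp_all add: BP_def lowp_bplus upp_bplus)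
  have e: "Rw (map xm (j # m)) (xp k) = lm (xm j) (Rw ?W (xp k)) + fa_word (0 # ?W) + Rw ?W (Hc (k + j))"
    by (simp add: b lo)
  have T1: "lm (xm j) (Rw ?W (xp k)) \<in> SK (length (j # m) - 1) (sum_list (j # m) + k)"
  proof (cases "m = []")
    case True then show ?thesis using K_SK[OF K0] by (simp add: lm_zero)
  next
    case False
    show ?thesis by (rule SK_cong[OF lm_SK[OF Cons.IH[OF False]]]) (use False in simp_all)
  qed
  have T2: "fa_word (0 # ?W) \<in> SK (length (j # m) - 1) (sum_list (j # m) + k)"
    using K_zero_letter[of "[]" ?W] map_xm_nwords by (simp add: K_SK)
  have T3: "Rw ?W (Hc (k + j)) \<in> SK (length (j # m) - 1) (sum_list (j # m) + k)"
    by (rule SK_cong[OF H_act]) simp_all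
  show ?case unfolding e by (intro subspD(2)[OF subsp_SK] T1 T2 T3)
qed

lemma R_Sp: "c \<in> Sp q d \<Longrightarrow> R (xp k) c \<in> SK (q - 1) (d + k)"
  unfolding Sp_def
proof (rule span_lin[OF _ linop_R subsp_SK])
  fix g assume "g \<in> {fa_word (map xm m) | m. length m = q \<and> sum_list m = d}"
  then obtain m where g: "g = fa_word (map xm m)" "length m = q" "sum_list m = d" by blast
  show "R (xp k) g \<in> SK (q - 1) (d + k)"
  proof (cases "m = []")
    case True then show ?thesis using g K_SK[OF K0] by (simp add: R_word)
  next
    case False then show ?thesis using g xp_act[OF False, of k] by (simp add: R_word)
  qed
qed auto

lemma R_Sp0: "c \<in> Sp 0 d \<Longrightarrow> R (xp k) c \<in> K"
  unfolding Sp_def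
proof (rule span_lin[OF _ linop_R subsp_K])
  fix g assume "g \<in> {fa_word (map xm m) | m. length m = 0 \<and> sum_list m = d}"
  then have "g = fa_word []" by auto
  then show "R (xp k) g \<in> K" by (simp add: R_word K0)
qed auto

lemma chain:
  "RCb (map xp sp) (fa_word (map xm s)) \<in>
     (if length sp \<le> length s then SK (length s - length sp) (sum_list s + sum_list sp) else K)"
proof (induction sp)
  case Nil then show ?case by (simp add: word_SK)
next
  case (Cons k sp)
  let ?f = "RCb (map xp sp) (fa_word (map xm s))"
  have fV: "?f \<in> V" by (rule RCb_V) (auto simp: BP_xp word_V map_xm_nwords)
  have e: "RCb (map xp (k # sp)) (fa_word (map xm s)) = R (xp k) ?f" by simp
  consider (lt) "length sp < length s" | (eq) "length sp = length s" | (gt) "length s < length sp" by linarith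
  then show ?case
  proof cases
    case lt
    then obtain c where c: "c \<in> Sp (length s - length sp) (sum_list s + sum_list sp)" "?f \<approx> c"
      using Cons.IH unfolding SK_def by auto
    have "R (xp k) ?f \<approx> R (xp k) c"
      using c valid_xp fV Sp_V by (intro eqK_R) auto
    moreover have "R (xp k) c \<in> SK (length s - length sp - 1) (sum_list s + sum_list sp + k)"
      by (rule R_Sp[OF c(1)])
    ultimately have "R (xp k) ?f \<in> SK (length s - length sp - 1) (sum_list s + sum_list sp + k)"
      by (rule SK_eqK)
    then show ?thesis unfolding e using lt by (auto elim: SK_cong)
  next
    case eq
    then obtain c where c: "c \<in> Sp 0 (sum_list s + sum_list sp)" "?f \<approx> c"
      using Cons.IH unfolding SK_def by auto
    have "R (xp k) ?f \<approx> R (xp k) c"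
      using c valid_xp fV Sp_V by (intro eqK_R) auto
    moreover have "R (xp k) c \<in> K" by (rule R_Sp0[OF c(1)])
    ultimately have "R (xp k) ?f \<in> K" unfolding eqK_def using Kadd by fastforce
    then show ?thesis unfolding e using eq by simp
  next
    case gt
    then have "?f \<in> K" using Cons.IH by simp
    then have "R (xp k) ?f \<in> K" using valid_xp by (intro RK)
    then show ?thesis unfolding e using gt by simp
  qed
qed

lemma word_swap: "fa_word (map xm (u @ a # b # w)) - fa_word (map xm (u @ b # a # w)) \<in> K"
proof -
  have "fa_word (map xm u @ xm a # xm b # map xm w) - fa_word (map xm u @ xm b # xm a # map xm w)
     - fa_word (map xm u @ br (xm a) (xm b) # map xm w) \<in> K"
    using NM_xm map_xm_nwords by (intro K_gen3) simp_all
  moreover have "fa_word (map xm u @ br (xm a) (xm b) # map xm w) \<in> K"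
    using K_zero_letter map_xm_nwords by (simp add: br_xm_xm)
  ultimately show ?thesis using Kadd by fastforce
qed

lemma word_insort: "fa_word (map xm (u @ j # l)) \<approx> fa_word (map xm (u @ insort j l))"
proof (induction l arbitrary: u)
  case Nil then show ?case by simp
next
  case (Cons a l)
  show ?case
  proof (cases "j \<le> a")
    case True then show ?thesis by simp
  next
    case False
    have "fa_word (map xm (u @ j # a # l)) \<approx> fa_word (map xm (u @ a # j # l))"
      using word_swap by (simp add: eqK_def)
    also have "\<dots> = fa_word (map xm ((u @ [a]) @ j # l))" by simp
    also have "\<dots> \<approx> fa_word (map xm ((u @ [a]) @ insort j l))" by (rule Cons.IH)
    also have "\<dots> = fa_word (map xm (u @ insort j (a # l)))" using False by simp
    finally show ?thesis .
  qed
qed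

lemma word_sort: "fa_word (map xm (u @ m)) \<approx> fa_word (map xm (u @ sort m))"
proof (induction m arbitrary: u)
  case Nil then show ?case by simp
next
  case (Cons j m)
  have "fa_word (map xm (u @ j # m)) = fa_word (map xm ((u @ [j]) @ m))" by simp
  also have "\<dots> \<approx> fa_word (map xm ((u @ [j]) @ sort m))" by (rule Cons.IH)
  also have "\<dots> = fa_word (map xm (u @ j # sort m))" by simp
  also have "\<dots> \<approx> fa_word (map xm (u @ insort j (sort m)))" by (rule word_insort)
  finally show ?case by simp
qed

lemma sum_list_sort: "sum_list (sort (m::nat list)) = sum_list m"
  by (metis mset_sort sum_mset_sum_list)

theorem main:
  assumes "sorted s"
  shows "(\<exists>v. pr_rel n (fa_mul (xvec_plus i r sp) (xvec_minus i r s)) v)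
    \<and> (\<forall>v. pr_rel n (fa_mul (xvec_plus i r sp) (xvec_minus i r s)) v \<longrightarrow>
         (\<exists>c \<in> cspan {xvec_minus i r s' | s'. sorted s' \<and> length sp \<le> length s
                \<and> length s' = length s - length sp
                \<and> sum_list s' = sum_list s + sum_list sp}.
            fa_diff v c \<in> ideal n))"
proof -
  let ?u = "fa_mul (xvec_plus i r sp) (xvec_minus i r s)"
  have u: "?u = fa_word (map xp sp @ map xm s)"
    by (simp add: xvec_plus_def xvec_minus_def mul_word_word)
  let ?v0 = "RCb (map xp sp) (fa_word (map xm s))"
  have v0V: "?v0 \<in> V" by (rule RCb_V) (auto simp: BP_xp word_V map_xm_nwords)
  have pr0: "pr_rel n ?u ?v0"
    unfolding pr_rel_def fa_diff_eq u
    using v0V existence[of "map xp sp" "map xm s"] BP_xp map_xm_nwords by (auto simp: V_def)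
  let ?T = "cspan {fa_word (map xm m) | m. length sp \<le> length s \<and> length m = length s - length sp
                \<and> sum_list m = sum_list s + sum_list sp}"
  let ?T' = "cspan {xvec_minus i r s' | s'. sorted s' \<and> length sp \<le> length s
                \<and> length s' = length s - length sp
                \<and> sum_list s' = sum_list s + sum_list sp}"
  obtain c where c: "c \<in> ?T" "?v0 \<approx> c"
  proof (cases "length sp \<le> length s")
    case True
    then have "?v0 \<in> SK (length s - length sp) (sum_list s + sum_list sp)" using chain[of sp s] by simp
    then obtain c where "c \<in> Sp (length s - length sp) (sum_list s + sum_list sp)" "?v0 \<approx> c"
      unfolding SK_def by blast
    moreover have "Sp (length s - length sp) (sum_list s + sum_list sp) = ?T"
      unfolding Sp_def using True by simp
    ultimately show ?thesis using that by simp
  next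
    case False
    then have "?v0 \<in> K" using chain[of sp s] by simp
    then show ?thesis using that[of 0] cspan_zero by (simp add: eqK_def)
  qed
  obtain c' where c': "c' \<in> ?T'" "c - c' \<in> K"
  proof -
    have "\<exists>f'\<in>?T'. c - f' \<in> K"
    proof (rule cspan_transfer[OF subsp_K _ c(1)])
      fix g assume "g \<in> {fa_word (map xm m) | m. length sp \<le> length s \<and> length m = length s - length sp
                \<and> sum_list m = sum_list s + sum_list sp}"
      then obtain m where m: "g = fa_word (map xm m)" "length sp \<le> length s" "length m = length s - length sp"
        "sum_list m = sum_list s + sum_list sp" by blast
      have "xvec_minus i r (sort m) \<in> {xvec_minus i r s' | s'. sorted s' \<and> length sp \<le> length s
                \<and> length s' = length s - length sp
                \<and> sum_list s' = sum_list s + sum_list sp}"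
        using m by (auto simp: sum_list_sort)
      moreover have "g - xvec_minus i r (sort m) \<in> K"
        using word_sort[of "[]" m] m(1) by (simp add: xvec_minus_def eqK_def)
      ultimately show "\<exists>g'\<in>{xvec_minus i r s' | s'. sorted s' \<and> length sp \<le> length s
                \<and> length s' = length s - length sp
                \<and> sum_list s' = sum_list s + sum_list sp}. g - g' \<in> K" by blast
    qed
    then show ?thesis using that by blast
  qed
  show ?thesis
  proof (intro conjI exI allI impI)
    show "pr_rel n ?u ?v0" by (rule pr0)
  next
    fix v assume "pr_rel n ?u v"
    then have "v - ?v0 \<in> K" using pr0 by (rule pr_unique)
    then have "v \<approx> ?v0" by (simp add: eqK_def)
    also have "?v0 \<approx> c" by (rule c(2))
    also have "c \<approx> c'" using c'(2) by (simp add: eqK_def)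
    finally have "v - c' \<in> ideal n" by (simp add: eqK_def K_ideal)
    then show "\<exists>c\<in>?T'. fa_diff v c \<in> ideal n" using c'(1) by (auto simp: fa_diff_eq)
  qed
qed

end

theorem proposition3p1:
  fixes r i :: nat and sp s :: "nat list"
  assumes "1 \<le> i" and "i \<le> r"
    and "sorted sp" and "\<forall>p\<in>set sp. 0 < p"
    and "sorted s"
  shows "(\<exists>v. pr_rel (Suc r) (fa_mul (xvec_plus i r sp) (xvec_minus i r s)) v)
    \<and> (\<forall>v. pr_rel (Suc r) (fa_mul (xvec_plus i r sp) (xvec_minus i r s)) v \<longrightarrow>
         (\<exists>c \<in> cspan {xvec_minus i r s' | s'. sorted s' \<and> length sp \<le> length s
                \<and> length s' = length s - length sp
                \<and> sum_list s' = sum_list s + sum_list sp}.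
            fa_diff v c \<in> ideal (Suc r)))"
proof -
  interpret cb "Suc r" i r by unfold_locales (use assms in auto)
  show ?thesis using main[OF assms(5)] by simp
qed


end
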